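(* Let $\rho>0$, let $\mathcal{X}\subseteq\mathbb{R}^d$ be a nonempty closed convex set, let $f\colon\mathbb{R}^d\to\mathbb{R}$ be $\rho$-weakly convex, and set $\varphi=f+\delta_{\mathcal{X}}$, where $\delta_{\mathcal{X}}$ is the indicator function of $\mathcal{X}$ ($0$ on $\mathcal{X}$, $+\infty$ off $\mathcal{X}$). Suppose the stochastic subgradient oracle satisfies: (A1) one can generate i.i.d. realizations $\xi_0,\xi_1,\ldots\sim P$ from a probability space $(\Omega,\mathcal{F},P)$; (A2) there is an open set $U\supseteq\mathcal{X}$ and a measurable map $G\colon U\times\Omega\to\mathbb{R}^d$ with $\mathbb{E}_\xi[G(x,\xi)]\in\partial f(x)$ for all $x\in U$; (A3) there is $L\ge 0$ with $\mathbb{E}_\xi\|G(x,\xi)\|^2\le L^2$ for all $x\in\mathcal{X}$. Fix $T\ge 0$, $x_0\in\mathcal{X}$ and stepsizes $\alpha_0,\ldots,\alpha_T\ge 0$ with $\sum_{t=0}^T\alpha_t>0$. Define $x_{t+1}=\mathrm{proj}_{\mathcal{X}}\big(x_t-\alpha_t G(x_t,\xi_t)\big)$ for $t=0,\ldots,T$, and let $t^*\in\{0,\ldots,T\}$ be sampled (independently of the $\xi_t$) with $\mathbb{P}(t^*=t)=\alpha_t/\sum_{i=0}^T\alpha_i$. Then for every $\bar\rho>\rho$ and every $t\in\{0,\ldots,T\}$, $$\mathbb{E}\big[\varphi_{1/\bar\rho}(x_{t+1})\big]\le \mathbb{E}\big[\varphi_{1/\bar\rho}(x_t)\big]-\frac{\alpha_t(\bar\rho-\rho)}{\bar\rho}\,\mathbb{E}\big[\|\nabla\varphi_{1/\bar\rho}(x_t)\|^2\big]+\frac{\alpha_t^2\bar\rho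 L^2}{2},$$ and $$\mathbb{E}\big[\|\nabla\varphi_{1/\bar\rho}(x_{t^*})\|^2\big]\le\frac{\bar\rho}{\bar\rho-\rho}\cdot\frac{\big(\varphi_{1/\bar\rho}(x_0)-\min\varphi\big)+\frac{\bar\rho L^2}{2}\sum_{t=0}^T\alpha_t^2}{\sum_{t=0}^T\alpha_t}.$$ In particular, if $\alpha_t=\gamma/\sqrt{T+1}$ for all $t$, for some real $\gamma>0$, then $$\mathbb{E}\big[\|\nabla\varphi_{1/(2\rho)}(x_{t^*})\|^2\big]\le 2\cdot\frac{\big(\varphi_{1/(2\rho)}(x_0)-\min\varphi\big)+\rho L^2\gamma^2}{\gamma\sqrt{T+1}}.$$
   Context: For $\varphi\colon\mathbb{R}^d\to\mathbb{R}\cup\{+\infty\}$ and $x$ with $\varphi(x)$ finite, the subdifferential $\partial\varphi(x)$ is the set of $v\in\mathbb{R}^d$ with $\varphi(y)\ge\varphi(x)+\langle v,y-x\rangle+o(\|y-x\|)$ as $y\to x$. A function $g$ is $\rho$-weakly convex if $x\mapsto g(x)+\frac{\rho}{2}\|x\|^2$ is convex. For $\lambda>0$, the Moreau envelope is $\varphi_\lambda(x)=\min_y\{\varphi(y)+\frac{1}{2\lambda}\|y-x\|^2\}$ and the proximal map is $\mathrm{prox}_{\lambda\varphi}(x)=\operatorname{argmin}_y\{\varphi(y)+\frac{1}{2\lambda}\|y-x\|^2\}$; when $\varphi$ is $\rho$-weakly convex and lower semicontinuous and $0<\lambda<\rho^{-1}$, $\varphi_\lambda$ is $C^1$ with $\nabla\varphi_\lambda(x)=\lambda^{-1}(x-\mathrm{prox}_{\lambda\varphi}(x))$.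 $\min\varphi$ denotes $\inf_x\varphi(x)$. $\mathrm{proj}_{\mathcal{X}}$ is the Euclidean nearest-point projection. $\mathbb{E}$ denotes expectation over all randomness ($\xi_0,\xi_1,\ldots$ and $t^*$). *)

theory Defs
  imports "HOL-Analysis.Analysis" "HOL-Probability.Probability"
begin

definition weakly_convex :: "real \<Rightarrow> ('a::real_normed_vector \<Rightarrow> real) \<Rightarrow> bool" where
  "weakly_convex \<rho> g \<longleftrightarrow> convex_on UNIV (\<lambda>x. g x + \<rho> / 2 * (norm x)\<^sup>2)"

definition subdiff :: "('a::real_inner \<Rightarrow> real) \<Rightarrow> 'a \<Rightarrow> 'a set" where
  "subdiff g x = {v. \<forall>e>0. \<exists>\<delta>>0. \<forall>y. norm (y - x) < \<delta> \<longrightarrow>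
       g y \<ge> g x + inner v (y - x) - e * norm (y - x)}"

definition indic_fun :: "'a set \<Rightarrow> 'a \<Rightarrow> ereal" where
  "indic_fun X x = (if x \<in> X then 0 else \<infinity>)"

definition phi_of :: "('a \<Rightarrow> real) \<Rightarrow> 'a set \<Rightarrow> 'a \<Rightarrow> ereal" where
  "phi_of f X y = ereal (f y) + indic_fun X y"

definition moreau_env :: "('a::real_normed_vector \<Rightarrow> ereal) \<Rightarrow> real \<Rightarrow> 'a \<Rightarrow> ereal" where
  "moreau_env \<phi> lam x = (INF y. \<phi> y + ereal ((norm (y - x))\<^sup>2 / (2 * lam)))"

definition grad :: "('a::real_inner \<Rightarrow> real) \<Rightarrow> 'a \<Rightarrow> 'a" where
  "grad g x = (THE D. GDERIV g x :> D)"

primrec sgd_iter :: "'a::euclidean_space set \<Rightarrow> ('a \<Rightarrow> 'b \<Rightarrow> 'a) \<Rightarrow> (nat \<Rightarrow> real)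
    \<Rightarrow> (nat \<Rightarrow> 'w \<Rightarrow> 'b) \<Rightarrow> 'a \<Rightarrow> nat \<Rightarrow> 'w \<Rightarrow> 'a" where
  "sgd_iter X G \<alpha> \<xi> x0 0 \<omega> = x0"
| "sgd_iter X G \<alpha> \<xi> x0 (Suc t) \<omega> =
     closest_point X (sgd_iter X G \<alpha> \<xi> x0 t \<omega> - \<alpha> t *\<^sub>R G (sgd_iter X G \<alpha> \<xi> x0 t \<omega>) (\<xi> t \<omega>))"

end

theory Submission
  imports Defs
begin

lemma norm_sq_add: "(norm (a + b))\<^sup>2 = (norm a)\<^sup>2 + 2 * inner a b + (norm (b::'a::real_inner))\<^sup>2"
  by (simp add: power2_norm_eq_inner inner_add_left inner_add_right inner_commute)

lemma norm_sq_diff: "(norm (a - b))\<^sup>2 = (norm a)\<^sup>2 - 2 * inner a b + (norm (b::'a::real_inner))\<^sup>2"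
  by (simp add: power2_norm_eq_inner inner_diff_left inner_diff_right inner_commute)

lemma nonneg_from_eps:
  fixes A c :: real
  assumes "\<And>e. e > 0 \<Longrightarrow> A \<ge> - e * c" "c \<ge> 0"
  shows "A \<ge> 0"
proof (rule ccontr)
  assume "\<not> A \<ge> 0"
  hence A: "A < 0" by simp
  show False
  proof (cases "c = 0")
    case True thus ?thesis using assms(1)[of 1] A by simp
  next
    case False
    hence c: "c > 0" using assms(2) by simp
    have pos: "-A/(2*c) > 0" using A c by (simp add: divide_neg_pos)
    have "A \<ge> - (-A/(2*c)) * c" using assms(1)[OF pos] .
    also have "- (-A/(2*c)) * c = A/2" using c by (simp add: field_simps)
    finally show False using A by simp
  qed
qed

lemma wc_subgrad_ineq:
  fixes f :: "'a::real_inner \<Rightarrow> real"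
  assumes wc: "weakly_convex \<rho> f" and rho: "\<rho> \<ge> 0" and v: "v \<in> subdiff f x"
  shows "f y \<ge> f x + inner v (y - x) - \<rho>/2 * (norm (y-x))\<^sup>2"
proof -
  define d where "d = y - x"
  define g where "g z = f z + \<rho>/2 * (norm z)\<^sup>2" for z
  have cvx: "convex_on UNIV g" using wc unfolding weakly_convex_def g_def .
  have ny: "(norm y)\<^sup>2 = (norm x)\<^sup>2 + 2 * inner x d + (norm d)\<^sup>2"
    using norm_sq_add[of x d] by (simp add: d_def)
  have main: "f y - f x - inner v d + \<rho>/2 * (norm d)\<^sup>2 \<ge> - e * norm d" if e: "e > 0" for e
  proof (cases "d = 0")
    case True thus ?thesis by (simp add: d_def)
  next
    case False
    hence nd: "norm d > 0" by simp
    obtain \<delta> where \<delta>: "\<delta> > 0" and fr: "\<And>z. norm (z - x) < \<delta> \<Longrightarrow> f z \<ge> f x + inner v (z - x) - e * norm (z - x)"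
      using v e unfolding subdiff_def by blast
    define t where "t = min (1/2) (\<delta> / (2 * norm d))"
    have t0: "t > 0" using \<delta> nd by (simp add: t_def)
    have t1: "t \<le> 1" by (simp add: t_def)
    have "t \<le> \<delta> / (2 * norm d)" by (simp add: t_def)
    hence "t * norm d \<le> \<delta>/2" using nd by (simp add: field_simps)
    hence tn: "norm ((x + t *\<^sub>R d) - x) < \<delta>" using t0 \<delta> by simp
    have fz: "f (x + t *\<^sub>R d) \<ge> f x + t * inner v d - e * (t * norm d)"
      using fr[OF tn] t0 by (simp add: inner_scaleR_right)
    have "x + t *\<^sub>R d = (1 - t) *\<^sub>R x + t *\<^sub>R y" by (simp add: d_def algebra_simps)
    hence gz: "g (x + t *\<^sub>R d) \<le> (1 - t) * g x + t * g y"
      using convex_onD[OF cvx, of t x y] t0 t1 by simp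
    have nz: "(norm (x + t *\<^sub>R d))\<^sup>2 = (norm x)\<^sup>2 + 2 * t * inner x d + t\<^sup>2 * (norm d)\<^sup>2"
      by (simp add: norm_sq_add power_mult_distrib)
    have low: "g (x + t *\<^sub>R d) \<ge> f x + t * inner v d - e * (t * norm d) + \<rho>/2 * ((norm x)\<^sup>2 + 2 * t * inner x d + t\<^sup>2 * (norm d)\<^sup>2)"
      using fz nz by (simp add: g_def)
    have e1: "t * (g y - g x) \<ge> g (x + t *\<^sub>R d) - g x" using gz by (simp add: algebra_simps)
    have e2: "g (x + t *\<^sub>R d) - g x \<ge> t * (inner v d - e * norm d + \<rho> * inner x d + \<rho>/2 * t * (norm d)\<^sup>2)"
      using low by (simp add: g_def algebra_simps power2_eq_square)
    have "t * (g y - g x) \<ge> t * (inner v d - e * norm d + \<rho> * inner x d + \<rho>/2 * t * (norm d)\<^sup>2)"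
      using e1 e2 by linarith
    hence "g y - g x \<ge> inner v d - e * norm d + \<rho> * inner x d + \<rho>/2 * t * (norm d)\<^sup>2"
      using t0 by (simp add: mult_le_cancel_left_pos)
    moreover have "\<rho>/2 * t * (norm d)\<^sup>2 \<ge> 0" using rho t0 by simp
    ultimately have "g y - g x \<ge> inner v d - e * norm d + \<rho> * inner x d" by linarith
    thus ?thesis using ny by (simp add: g_def algebra_simps)
  qed
  have "f y - f x - inner v d + \<rho>/2 * (norm d)\<^sup>2 \<ge> 0"
    by (rule nonneg_from_eps[OF main]) auto
  thus ?thesis by (simp add: d_def)
qed

lemma norm_sq_convex:
  fixes a b :: "'a::real_inner"
  shows "(norm ((1 - t) *\<^sub>R a + t *\<^sub>R b))\<^sup>2 = (1 - t) * (norm a)\<^sup>2 + t * (norm b)\<^sup>2 - t * (1 - t) * (norm (a - b))\<^sup>2"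
  unfolding power2_norm_eq_inner
  by (simp add: inner_add_left inner_add_right inner_diff_left inner_diff_right
      inner_commute algebra_simps)

lemma weakly_convex_continuous:
  fixes f :: "'a::euclidean_space \<Rightarrow> real"
  assumes "weakly_convex \<rho> f"
  shows "continuous_on UNIV f"
proof -
  have "continuous_on UNIV (\<lambda>x. f x + \<rho> / 2 * (norm x)\<^sup>2)"
    using assms unfolding weakly_convex_def by (intro convex_on_continuous) auto
  hence "continuous_on UNIV (\<lambda>x. (f x + \<rho> / 2 * (norm x)\<^sup>2) - \<rho> / 2 * (norm x)\<^sup>2)"
    by (rule continuous_on_diff) (auto intro!: continuous_intros)
  moreover have "(\<lambda>x. (f x + \<rho> / 2 * (norm x)\<^sup>2) - \<rho> / 2 * (norm x)\<^sup>2) = f" by auto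
  ultimately show ?thesis by metis
qed

lemma quad_large:
  fixes m b c B r :: real
  assumes m: "m > 0" and b: "b \<ge> 0" and r: "r \<ge> max 1 (2 * (b + \<bar>c\<bar> + \<bar>B\<bar> + 1) / m)"
  shows "m/2 * r\<^sup>2 - b * r - c > B"
proof -
  have r1: "r \<ge> 1" using r by simp
  have "r \<ge> 2 * (b + \<bar>c\<bar> + \<bar>B\<bar> + 1) / m" using r by simp
  hence "m/2 * r \<ge> b + \<bar>c\<bar> + \<bar>B\<bar> + 1" using m by (simp add: field_simps)
  hence "m/2 * r * r \<ge> (b + \<bar>c\<bar> + \<bar>B\<bar> + 1) * r" using r1 by (intro mult_right_mono) auto
  moreover have "(b + \<bar>c\<bar> + \<bar>B\<bar> + 1) * r \<ge> b * r + \<bar>c\<bar> + \<bar>B\<bar> + 1"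
  proof -
    have "(\<bar>c\<bar> + \<bar>B\<bar> + 1) * r \<ge> (\<bar>c\<bar> + \<bar>B\<bar> + 1) * 1" using r1 by (intro mult_left_mono) auto
    thus ?thesis by (simp add: algebra_simps)
  qed
  ultimately show ?thesis by (simp add: power2_eq_square)
qed

lemma quad_low:
  fixes m b r :: real
  assumes "m > 0"
  shows "m/2 * r\<^sup>2 - b * r \<ge> - b\<^sup>2 / (2*m)"
proof -
  have "0 \<le> (m * r - b)\<^sup>2" by simp
  hence "0 \<le> m\<^sup>2 * r\<^sup>2 - 2 * m * b * r + b\<^sup>2" by (simp add: power2_eq_square algebra_simps)
  hence "0 \<le> (m\<^sup>2 * r\<^sup>2 - 2 * m * b * r + b\<^sup>2) / (2*m)" using assms by simp
  thus ?thesis using assms by (simp add: field_simps power2_eq_square)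
qed

locale mor =
  fixes \<rho> \<rho>b :: real and f :: "'a::euclidean_space \<Rightarrow> real" and X :: "'a set" and z0 v0 :: 'a
  assumes rho: "\<rho> > 0" and rhob: "\<rho>b > \<rho>" and X_ne: "X \<noteq> {}" and X_closed: "closed X"
    and X_convex: "convex X" and wc: "weakly_convex \<rho> f" and z0: "z0 \<in> X" and v0: "v0 \<in> subdiff f z0"
begin

definition "h x y = f y + \<rho>b/2 * (norm (y - x))\<^sup>2"
definition "\<mu> = \<rho>b - \<rho>"

lemma mu_pos: "\<mu> > 0" using rhob by (simp add: \<mu>_def)

lemma f_cont: "continuous_on UNIV f" using weakly_convex_continuous[OF wc] .

lemma f_low: "f y \<ge> f z0 + inner v0 (y - z0) - \<rho>/2 * (norm (y - z0))\<^sup>2"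
  using wc_subgrad_ineq[OF wc _ v0] rho by simp

lemma h_cont: "continuous_on S (h x)"
  unfolding h_def by (intro continuous_intros continuous_on_subset[OF f_cont]) auto

lemma h_low: "h x y \<ge> \<mu>/2 * (norm (y - x))\<^sup>2 - (norm v0 + \<rho> * norm (x - z0)) * norm (y - x)
      + (f z0 - norm v0 * norm (x - z0) - \<rho>/2 * (norm (x - z0))\<^sup>2)"
proof -
  define u where "u = y - x"
  define w where "w = x - z0"
  have yz: "y - z0 = u + w" by (simp add: u_def w_def)
  have i1: "inner v0 (u + w) \<ge> - (norm v0 * (norm u + norm w))"
  proof -
    have "\<bar>inner v0 (u + w)\<bar> \<le> norm v0 * norm (u + w)" by (rule Cauchy_Schwarz_ineq2)
    also have "\<dots> \<le> norm v0 * (norm u + norm w)" by (intro mult_left_mono norm_triangle_ineq) auto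
    finally show ?thesis by linarith
  qed
  have i2: "(norm (u + w))\<^sup>2 \<le> (norm u)\<^sup>2 + 2 * norm u * norm w + (norm w)\<^sup>2"
  proof -
    have "norm (u + w) \<le> norm u + norm w" by (rule norm_triangle_ineq)
    hence "(norm (u + w))\<^sup>2 \<le> (norm u + norm w)\<^sup>2" by (intro power_mono) auto
    thus ?thesis by (simp add: power2_eq_square algebra_simps)
  qed
  have "h x y \<ge> f z0 - norm v0 * (norm u + norm w) - \<rho>/2 * ((norm u)\<^sup>2 + 2 * norm u * norm w + (norm w)\<^sup>2) + \<rho>b/2 * (norm u)\<^sup>2"
  proof -
    have "h x y \<ge> f z0 + inner v0 (u + w) - \<rho>/2 * (norm (u + w))\<^sup>2 + \<rho>b/2 * (norm u)\<^sup>2"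
      using f_low[of y] unfolding h_def yz u_def by simp
    moreover have "\<rho>/2 * (norm (u + w))\<^sup>2 \<le> \<rho>/2 * ((norm u)\<^sup>2 + 2 * norm u * norm w + (norm w)\<^sup>2)"
      using i2 rho by (intro mult_left_mono) auto
    ultimately show ?thesis using i1 by linarith
  qed
  thus ?thesis unfolding \<mu>_def u_def[symmetric] w_def[symmetric] by (simp add: algebra_simps diff_divide_distrib)
qed

lemma exists_min: "\<exists>p\<in>X. \<forall>y\<in>X. h x p \<le> h x y"
proof -
  define b where "b = norm v0 + \<rho> * norm (x - z0)"
  define c where "c = - (f z0 - norm v0 * norm (x - z0) - \<rho>/2 * (norm (x - z0))\<^sup>2)"
  define B where "B = h x z0"
  define R where "R = max (max 1 (2 * (b + \<bar>c\<bar> + \<bar>B\<bar> + 1) / \<mu>)) (norm (z0 - x))"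
  have b0: "b \<ge> 0" using rho by (simp add: b_def)
  define K where "K = X \<inter> cball x R"
  have Kc: "compact K" unfolding K_def using X_closed by (intro closed_Int_compact) auto
  have Kne: "K \<noteq> {}" unfolding K_def using z0 by (auto simp: R_def dist_norm norm_minus_commute)
  obtain p where p: "p \<in> K" "\<forall>y\<in>K. h x p \<le> h x y"
    using continuous_attains_inf[OF Kc Kne h_cont] by blast
  have "\<forall>y\<in>X. h x p \<le> h x y"
  proof
    fix y assume y: "y \<in> X"
    show "h x p \<le> h x y"
    proof (cases "y \<in> K")
      case True thus ?thesis using p by auto
    next
      case False
      hence ny: "norm (y - x) > R" using y by (auto simp: K_def dist_norm norm_minus_commute)
      have z0K: "z0 \<in> K" unfolding K_def using z0 by (auto simp: R_def dist_norm norm_minus_commute)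
      have "norm (y - x) \<ge> max 1 (2 * (b + \<bar>c\<bar> + \<bar>B\<bar> + 1) / \<mu>)" using ny unfolding R_def by simp
      from quad_large[OF mu_pos b0 this] have "\<mu>/2 * (norm (y - x))\<^sup>2 - b * norm (y - x) - c > B" .
      hence "h x y > B" using h_low[where x=x and y=y] unfolding b_def c_def by linarith
      moreover have "h x p \<le> B" using p z0K unfolding B_def by auto
      ultimately show ?thesis by simp
    qed
  qed
  thus ?thesis using p(1) unfolding K_def by blast
qed

definition "p x = (SOME p. p \<in> X \<and> (\<forall>y\<in>X. h x p \<le> h x y))"

lemma p_in: "p x \<in> X" and p_min: "y \<in> X \<Longrightarrow> h x (p x) \<le> h x y"
proof -
  have "p x \<in> X \<and> (\<forall>y\<in>X. h x (p x) \<le> h x y)"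
    unfolding p_def using someI_ex[OF exists_min[of x, unfolded Bex_def]] .
  thus "p x \<in> X" "y \<in> X \<Longrightarrow> h x (p x) \<le> h x y" by auto
qed

definition "env x = h x (p x)"

lemma key: assumes y: "y \<in> X" shows "h x y \<ge> env x + \<mu>/2 * (norm (y - p x))\<^sup>2"
proof -
  define q where "q = p x"
  define D where "D = (norm (y - q))\<^sup>2"
  define g where "g z = f z + \<rho>/2 * (norm z)\<^sup>2" for z
  have cvx: "convex_on UNIV g" using wc unfolding weakly_convex_def g_def .
  have q: "q \<in> X" unfolding q_def by (rule p_in)
  have ineq: "h x y - h x q - \<mu>/2 * D \<ge> - \<mu>/2 * t * D" if t: "0 < t" "t \<le> 1" for t
  proof -
    define z where "z = (1 - t) *\<^sub>R q + t *\<^sub>R y"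
    have zX: "z \<in> X" unfolding z_def using X_convex q y t by (auto intro: convexD_alt)
    have hz: "h x q \<le> h x z" unfolding q_def by (rule p_min[OF zX[unfolded q_def]])
    have gz: "g z \<le> (1 - t) * g q + t * g y" unfolding z_def using convex_onD[OF cvx, of t q y] t by simp
    have n1: "(norm (z - x))\<^sup>2 = (1 - t) * (norm (q - x))\<^sup>2 + t * (norm (y - x))\<^sup>2 - t * (1 - t) * D"
    proof -
      have "z - x = (1 - t) *\<^sub>R (q - x) + t *\<^sub>R (y - x)" unfolding z_def by (simp add: algebra_simps)
      thus ?thesis unfolding D_def using norm_sq_convex[of t "q - x" "y - x"] by (simp add: norm_minus_commute)
    qed
    have n2: "(norm z)\<^sup>2 = (1 - t) * (norm q)\<^sup>2 + t * (norm y)\<^sup>2 - t * (1 - t) * D"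
      unfolding z_def D_def using norm_sq_convex[of t q y] by (simp add: norm_minus_commute)
    have hzeq: "h x z = g z - \<rho>/2 * (norm z)\<^sup>2 + \<rho>b/2 * (norm (z - x))\<^sup>2" unfolding h_def g_def by simp
    have e1: "h x z = g z - \<rho>/2 * ((1 - t) * (norm q)\<^sup>2 + t * (norm y)\<^sup>2 - t * (1 - t) * D)
         + \<rho>b/2 * ((1 - t) * (norm (q - x))\<^sup>2 + t * (norm (y - x))\<^sup>2 - t * (1 - t) * D)"
      unfolding hzeq n1 n2 ..
    have e2: "(1 - t) * h x q + t * h x y - \<mu>/2 * t * (1 - t) * D = (1 - t) * g q + t * g y
         - \<rho>/2 * ((1 - t) * (norm q)\<^sup>2 + t * (norm y)\<^sup>2 - t * (1 - t) * D)
         + \<rho>b/2 * ((1 - t) * (norm (q - x))\<^sup>2 + t * (norm (y - x))\<^sup>2 - t * (1 - t) * D)"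
      unfolding h_def g_def \<mu>_def by (simp add: field_simps)
    have "h x z \<le> (1 - t) * h x q + t * h x y - \<mu>/2 * t * (1 - t) * D"
      using gz e1 e2 by linarith
    moreover have "t * (h x y - h x q - \<mu>/2 * D) - t * (- \<mu>/2 * t * D) = ((1 - t) * h x q + t * h x y - \<mu>/2 * t * (1 - t) * D) - h x q"
      by (simp add: field_simps)
    ultimately have "t * (h x y - h x q - \<mu>/2 * D) \<ge> t * (- \<mu>/2 * t * D)" using hz by linarith
    thus ?thesis by (rule mult_left_le_imp_le[OF _ t(1)])
  qed
  have D0: "D \<ge> 0" unfolding D_def by simp
  have "h x y - h x q - \<mu>/2 * D \<ge> 0"
  proof (rule nonneg_from_eps[where c = "\<mu>/2 * D"])
    fix e :: real assume e: "e > 0"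
    define t where "t = min 1 e"
    have t: "0 < t" "t \<le> 1" "t \<le> e" using e by (auto simp: t_def)
    have "- e * (\<mu>/2 * D) \<le> - \<mu>/2 * t * D"
      using t mu_pos D0 by (simp add: mult_right_mono mult_left_mono algebra_simps)
    also have "\<dots> \<le> h x y - h x q - \<mu>/2 * D" using ineq t by simp
    finally show "h x y - h x q - \<mu>/2 * D \<ge> - e * (\<mu>/2 * D)" .
  next
    show "\<mu>/2 * D \<ge> 0" using mu_pos D0 by simp
  qed
  thus ?thesis unfolding env_def q_def D_def by simp
qed

end

lemma gderiv_from_quad:
  fixes F :: "'a::real_inner \<Rightarrow> real"
  assumes "\<And>y. \<bar>F y - F x - inner (y - x) D\<bar> \<le> C * (norm (y - x))\<^sup>2"
  shows "GDERIV F x :> D"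
  unfolding gderiv_def has_derivative_iff_norm
proof
  show "bounded_linear (\<lambda>h. inner h D)" by (rule bounded_linear_inner_left)
  show "((\<lambda>y. norm (F y - F x - inner (y - x) D) / norm (y - x)) \<longlongrightarrow> 0) (at x)"
  proof (rule Lim_null_comparison)
    show "\<forall>\<^sub>F y in at x. norm (norm (F y - F x - inner (y - x) D) / norm (y - x)) \<le> C * norm (y - x)"
    proof (rule always_eventually, rule allI)
      fix y
      show "norm (norm (F y - F x - inner (y - x) D) / norm (y - x)) \<le> C * norm (y - x)"
      proof (cases "y = x")
        case True thus ?thesis by simp
      next
        case False
        hence n: "norm (y - x) > 0" by simp
        have "\<bar>F y - F x - inner (y - x) D\<bar> / norm (y - x) \<le> C * (norm (y - x))\<^sup>2 / norm (y - x)"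
          using assms[of y] n by (intro divide_right_mono) auto
        also have "\<dots> = C * norm (y - x)" using n by (simp add: power2_eq_square)
        finally show ?thesis by simp
      qed
    qed
    show "((\<lambda>y. C * norm (y - x)) \<longlongrightarrow> 0) (at x)"
    proof -
      have "((\<lambda>y. C * norm (y - x)) \<longlongrightarrow> C * norm (x - x)) (at x)"
        by (intro tendsto_intros)
      thus ?thesis by simp
    qed
  qed
qed

lemma grad_eqI:
  assumes "GDERIV F x :> D" shows "grad F x = D"
  unfolding grad_def
proof (rule the_equality)
  show "GDERIV F x :> D" by (rule assms)
  fix D' assume "GDERIV F x :> D'"
  hence "(\<lambda>h. inner h D') = (\<lambda>h. inner h D)"
    using assms unfolding gderiv_def by (rule has_derivative_unique)
  hence "inner (D' - D) D' = inner (D' - D) D" by metis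
  hence "inner (D' - D) (D' - D) = 0" by (simp add: inner_diff_right)
  thus "D' = D" by simp
qed

lemma sqdiff: "(norm (a - x))\<^sup>2 - (norm (a - y))\<^sup>2 = 2 * inner a (y - x) + (norm x)\<^sup>2 - (norm (y::'a::real_inner))\<^sup>2"
  unfolding power2_norm_eq_inner
  by (simp add: inner_diff_left inner_diff_right inner_commute algebra_simps)

context mor begin

lemma moreau_eq: "moreau_env (phi_of f X) (1/\<rho>b) x = ereal (env x)"
proof -
  have eq: "(norm (y - x))\<^sup>2 / (2 * (1/\<rho>b)) = \<rho>b/2 * (norm (y - x))\<^sup>2" for y by simp
  show ?thesis unfolding moreau_env_def eq
  proof (rule antisym)
    show "(INF y. phi_of f X y + ereal (\<rho>b / 2 * (norm (y - x))\<^sup>2)) \<le> ereal (env x)"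
      by (rule INF_lower2[of "p x"]) (auto simp: phi_of_def indic_fun_def p_in env_def h_def)
    show "ereal (env x) \<le> (INF y. phi_of f X y + ereal (\<rho>b / 2 * (norm (y - x))\<^sup>2))"
    proof (rule INF_greatest)
      fix y show "ereal (env x) \<le> phi_of f X y + ereal (\<rho>b / 2 * (norm (y - x))\<^sup>2)"
      proof (cases "y \<in> X")
        case True
        hence "env x \<le> h x y" unfolding env_def by (rule p_min)
        thus ?thesis using True by (simp add: phi_of_def indic_fun_def h_def)
      next
        case False thus ?thesis by (simp add: phi_of_def indic_fun_def)
      qed
    qed
  qed
qed

lemma env_upper: "env y \<le> env x + \<rho>b * inner (x - p x) (y - x) + \<rho>b/2 * (norm (y - x))\<^sup>2"
proof -
  have "env y \<le> h y (p x)" unfolding env_def by (rule p_min[OF p_in])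
  also have "h y (p x) = env x + \<rho>b/2 * ((norm (p x - y))\<^sup>2 - (norm (p x - x))\<^sup>2)"
    unfolding env_def h_def by (simp add: algebra_simps)
  also have "(norm (p x - y))\<^sup>2 - (norm (p x - x))\<^sup>2 = 2 * inner (x - p x) (y - x) + (norm (y - x))\<^sup>2"
    unfolding sqdiff unfolding power2_norm_eq_inner
    by (simp add: inner_diff_left inner_diff_right inner_commute algebra_simps)
  finally show ?thesis by (simp add: algebra_simps)
qed

lemma env_lower: "env y \<ge> env x + \<rho>b * inner (x - p x) (y - x) - \<rho>b\<^sup>2/(2*\<mu>) * (norm (y - x))\<^sup>2"
proof -
  have k: "h x (p y) \<ge> env x + \<mu>/2 * (norm (p y - p x))\<^sup>2" by (rule key[OF p_in])
  have "env y - env x \<ge> \<rho>b/2 * ((norm (p y - y))\<^sup>2 - (norm (p y - x))\<^sup>2) + \<mu>/2 * (norm (p y - p x))\<^sup>2"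
    using k unfolding env_def h_def by (simp add: algebra_simps)
  moreover have "(norm (p y - y))\<^sup>2 - (norm (p y - x))\<^sup>2 = 2 * inner (x - p x) (y - x) + 2 * inner (p x - p y) (y - x) + (norm (y - x))\<^sup>2"
    unfolding sqdiff unfolding power2_norm_eq_inner
    by (simp add: inner_diff_left inner_diff_right inner_commute algebra_simps)
  moreover have "\<rho>b * inner (p x - p y) (y - x) + \<mu>/2 * (norm (p y - p x))\<^sup>2 \<ge> - \<rho>b\<^sup>2/(2*\<mu>) * (norm (y - x))\<^sup>2"
  proof -
    have "0 \<le> \<mu>/2 * (norm ((p x - p y) + (\<rho>b/\<mu>) *\<^sub>R (y - x)))\<^sup>2" using mu_pos by simp
    also have "\<dots> = \<mu>/2 * ((norm (p x - p y))\<^sup>2 + 2 * inner (p x - p y) ((\<rho>b/\<mu>) *\<^sub>R (y - x)) + (norm ((\<rho>b/\<mu>) *\<^sub>R (y - x)))\<^sup>2)"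
      by (simp only: norm_sq_add)
    also have "\<dots> = \<mu>/2 * ((norm (p x - p y))\<^sup>2 + 2 * (\<rho>b/\<mu>) * inner (p x - p y) (y - x) + (\<rho>b/\<mu>)\<^sup>2 * (norm (y - x))\<^sup>2)"
      by (simp add: power_mult_distrib power_divide power2_abs)
    also have "\<dots> = \<mu>/2 * (norm (p x - p y))\<^sup>2 + \<rho>b * inner (p x - p y) (y - x) + \<rho>b\<^sup>2/(2*\<mu>) * (norm (y - x))\<^sup>2"
      using mu_pos by (simp add: field_simps power2_eq_square)
    finally show ?thesis by (simp add: norm_minus_commute)
  qed
  moreover have "\<rho>b/2 * (norm (y - x))\<^sup>2 \<ge> 0" using rho rhob by simp
  ultimately show ?thesis by (simp add: algebra_simps)
qed

lemma env_deriv: "GDERIV env x :> \<rho>b *\<^sub>R (x - p x)"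
proof (rule gderiv_from_quad[where C = "\<rho>b/2 + \<rho>b\<^sup>2/(2*\<mu>)"])
  fix y
  have i: "inner (y - x) (\<rho>b *\<^sub>R (x - p x)) = \<rho>b * inner (x - p x) (y - x)" by (simp add: inner_commute)
  have c1: "\<rho>b/2 * (norm (y - x))\<^sup>2 \<le> (\<rho>b/2 + \<rho>b\<^sup>2/(2*\<mu>)) * (norm (y - x))\<^sup>2"
    using mu_pos by (intro mult_right_mono) auto
  have c2: "\<rho>b\<^sup>2/(2*\<mu>) * (norm (y - x))\<^sup>2 \<le> (\<rho>b/2 + \<rho>b\<^sup>2/(2*\<mu>)) * (norm (y - x))\<^sup>2"
    using rho rhob by (intro mult_right_mono) auto
  show "\<bar>env y - env x - inner (y - x) (\<rho>b *\<^sub>R (x - p x))\<bar> \<le> (\<rho>b/2 + \<rho>b\<^sup>2/(2*\<mu>)) * (norm (y - x))\<^sup>2"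
    unfolding i using env_upper[of y x] env_lower[of x y] c1 c2 by (simp add: abs_le_iff) 
qed

lemma grad_eq: "grad (\<lambda>z. real_of_ereal (moreau_env (phi_of f X) (1/\<rho>b) z)) x = \<rho>b *\<^sub>R (x - p x)"
proof -
  have "(\<lambda>z. real_of_ereal (moreau_env (phi_of f X) (1/\<rho>b) z)) = env" by (simp add: moreau_eq)
  thus ?thesis using grad_eqI[OF env_deriv] by simp
qed

lemma p_lip: "norm (p x - p y) \<le> \<rho>b/\<mu> * norm (x - y)"
proof -
  have k1: "h x (p y) \<ge> env x + \<mu>/2 * (norm (p y - p x))\<^sup>2" by (rule key[OF p_in])
  have k2: "h y (p x) \<ge> env y + \<mu>/2 * (norm (p x - p y))\<^sup>2" by (rule key[OF p_in])
  have "\<rho>b/2 * (((norm (p y - x))\<^sup>2 - (norm (p y - y))\<^sup>2) + ((norm (p x - y))\<^sup>2 - (norm (p x - x))\<^sup>2)) \<ge> \<mu> * (norm (p x - p y))\<^sup>2"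
    using k1 k2 unfolding env_def h_def by (simp add: algebra_simps norm_minus_commute)
  moreover have "((norm (p y - x))\<^sup>2 - (norm (p y - y))\<^sup>2) + ((norm (p x - y))\<^sup>2 - (norm (p x - x))\<^sup>2) = 2 * inner (p x - p y) (x - y)"
    unfolding sqdiff by (simp add: inner_diff_left inner_diff_right inner_commute algebra_simps)
  ultimately have "\<mu> * (norm (p x - p y))\<^sup>2 \<le> \<rho>b * inner (p x - p y) (x - y)" by simp
  also have "\<dots> \<le> \<rho>b * (norm (p x - p y) * norm (x - y))"
    using rho rhob by (intro mult_left_mono) (auto simp: norm_cauchy_schwarz)
  finally have *: "\<mu> * norm (p x - p y) * norm (p x - p y) \<le> (\<rho>b * norm (x - y)) * norm (p x - p y)"
    by (simp add: power2_eq_square algebra_simps)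
  show ?thesis
  proof (cases "p x = p y")
    case True thus ?thesis using rho rhob mu_pos by simp
  next
    case False
    hence "\<mu> * norm (p x - p y) \<le> \<rho>b * norm (x - y)" using * by (simp add: mult_le_cancel_right)
    thus ?thesis using mu_pos by (simp add: field_simps)
  qed
qed

lemma rhob_pos: "\<rho>b > 0" using rho rhob by simp

lemma p_cont: "continuous_on S p"
proof -
  have "(\<rho>b/\<mu>)-lipschitz_on S p"
    by (rule lipschitz_onI) (use p_lip mu_pos rhob_pos in \<open>auto simp: dist_norm\<close>)
  thus ?thesis by (rule lipschitz_on_continuous_on)
qed

lemma env_cont: "continuous_on S env"
proof -
  have "continuous_on S (\<lambda>x. f (p x) + \<rho>b/2 * (norm (p x - x))\<^sup>2)"
    by (intro continuous_intros p_cont continuous_on_compose2[OF f_cont p_cont]) auto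
  thus ?thesis unfolding env_def h_def .
qed

lemma env_ge_inf: "(INF y. phi_of f X y) \<le> ereal (env x)"
proof -
  have "(INF y. phi_of f X y) \<le> phi_of f X (p x)" by (rule INF_lower) simp
  also have "\<dots> = ereal (f (p x))" using p_in by (simp add: phi_of_def indic_fun_def)
  also have "\<dots> \<le> ereal (env x)" using rhob_pos by (simp add: env_def h_def)
  finally show ?thesis .
qed

lemma step_ineq:
  "env (closest_point X (x - \<alpha> *\<^sub>R w)) \<le> env x - \<rho>b * \<alpha> * inner w (x - p x) + \<rho>b * \<alpha>\<^sup>2 / 2 * (norm w)\<^sup>2"
proof -
  define y where "y = closest_point X (x - \<alpha> *\<^sub>R w)"
  have "env y \<le> h y (p x)" unfolding env_def by (rule p_min[OF p_in])
  also have "norm (p x - y) \<le> norm (p x - (x - \<alpha> *\<^sub>R w))"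
    using closest_point_lipschitz[OF X_convex X_closed X_ne, of "p x" "x - \<alpha> *\<^sub>R w"]
    unfolding y_def closest_point_self[OF p_in] by (simp add: dist_norm)
  hence "(norm (p x - y))\<^sup>2 \<le> (norm (p x - (x - \<alpha> *\<^sub>R w)))\<^sup>2" by (intro power_mono) auto
  hence "h y (p x) \<le> f (p x) + \<rho>b/2 * (norm (p x - (x - \<alpha> *\<^sub>R w)))\<^sup>2"
    unfolding h_def using rho rhob by (simp add: mult_left_mono)
  also have "(norm (p x - (x - \<alpha> *\<^sub>R w)))\<^sup>2 = (norm (p x - x))\<^sup>2 - 2 * \<alpha> * inner w (x - p x) + \<alpha>\<^sup>2 * (norm w)\<^sup>2"
    unfolding power2_norm_eq_inner
    by (simp add: inner_diff_left inner_diff_right inner_commute algebra_simps power2_eq_square)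
  finally show ?thesis unfolding y_def env_def h_def by (simp add: algebra_simps)
qed

lemma subgrad_prox:
  assumes x: "x \<in> X" and v: "v \<in> subdiff f x"
  shows "inner v (x - p x) \<ge> \<mu> * (norm (x - p x))\<^sup>2"
proof -
  have a: "f (p x) \<ge> f x + inner v (p x - x) - \<rho>/2 * (norm (p x - x))\<^sup>2"
    using wc_subgrad_ineq[OF wc _ v] rho by simp
  have b: "h x x \<ge> env x + \<mu>/2 * (norm (x - p x))\<^sup>2" by (rule key[OF x])
  have c: "inner v (p x - x) = - inner v (x - p x)" by (simp add: inner_diff_right)
  have d: "(norm (p x - x))\<^sup>2 = (norm (x - p x))\<^sup>2" by (simp add: norm_minus_commute)
  have b': "f x \<ge> f (p x) + \<rho>b/2 * (norm (x - p x))\<^sup>2 + (\<rho>b - \<rho>)/2 * (norm (x - p x))\<^sup>2"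
    using b unfolding env_def h_def \<mu>_def by (simp add: norm_minus_commute)
  have "inner v (x - p x) - \<mu> * (norm (x - p x))\<^sup>2 = (f (p x) - (f x + inner v (p x - x) - \<rho>/2 * (norm (p x - x))\<^sup>2))
     + (f x - (f (p x) + \<rho>b/2 * (norm (x - p x))\<^sup>2 + (\<rho>b - \<rho>)/2 * (norm (x - p x))\<^sup>2))"
    unfolding \<mu>_def c d by (simp add: field_simps)
  thus ?thesis using a b' by linarith
qed

end

lemma sq_sum_le: "((a::real) + b)\<^sup>2 \<le> 2 * a\<^sup>2 + 2 * b\<^sup>2"
proof -
  have "0 \<le> (a - b)\<^sup>2" by simp
  thus ?thesis by (simp add: power2_eq_square algebra_simps)
qed

context mor begin

definition "A_env = \<bar>f z0\<bar> + norm v0 + (norm v0)\<^sup>2 / \<mu>"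
definition "B_env = norm v0 + \<rho>/2 + \<rho>\<^sup>2/\<mu> + \<rho>b/2"

lemma env_abs: "\<bar>env x\<bar> \<le> A_env + B_env * (norm (x - z0))\<^sup>2"
proof -
  define W where "W = norm (x - z0)"
  define b where "b = norm v0 + \<rho> * W"
  have W0: "W \<ge> 0" by (simp add: W_def)
  have up: "env x \<le> f z0 + \<rho>b/2 * W\<^sup>2"
    using p_min[OF z0, of x] unfolding env_def h_def W_def by (simp add: norm_minus_commute)
  have l1: "env x \<ge> \<mu>/2 * (norm (p x - x))\<^sup>2 - b * norm (p x - x) + (f z0 - norm v0 * W - \<rho>/2 * W\<^sup>2)"
    using h_low[where x=x and y="p x"] unfolding env_def b_def W_def .
  have l2: "\<mu>/2 * (norm (p x - x))\<^sup>2 - b * norm (p x - x) \<ge> - b\<^sup>2/(2*\<mu>)" by (rule quad_low[OF mu_pos])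
  have l3: "b\<^sup>2 \<le> 2 * (norm v0)\<^sup>2 + 2 * (\<rho>\<^sup>2 * W\<^sup>2)"
    using sq_sum_le[of "norm v0" "\<rho> * W"] unfolding b_def by (simp add: power_mult_distrib)
  hence l4: "b\<^sup>2/(2*\<mu>) \<le> (norm v0)\<^sup>2/\<mu> + \<rho>\<^sup>2/\<mu> * W\<^sup>2"
    using mu_pos by (simp add: field_simps)
  have l5: "norm v0 * W \<le> norm v0 + norm v0 * W\<^sup>2"
  proof -
    have "W \<le> 1 + W\<^sup>2"
    proof (cases "W \<le> 1")
      case True thus ?thesis by (simp add: add_increasing2)
    next
      case False
      hence "W * 1 \<le> W * W" using W0 by (intro mult_left_mono) auto
      thus ?thesis by (simp add: power2_eq_square)
    qed
    thus ?thesis by (metis distrib_left mult.right_neutral mult_left_mono norm_ge_zero)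
  qed
  have lo: "env x \<ge> - \<bar>f z0\<bar> - norm v0 - (norm v0)\<^sup>2/\<mu> - (norm v0 + \<rho>/2 + \<rho>\<^sup>2/\<mu>) * W\<^sup>2"
    using l1 l2 l4 l5 by (simp add: algebra_simps)
  have "\<rho>b/2 * W\<^sup>2 \<le> B_env * W\<^sup>2" unfolding B_env_def using rho mu_pos
    by (intro mult_right_mono) auto
  moreover have "(norm v0 + \<rho>/2 + \<rho>\<^sup>2/\<mu>) * W\<^sup>2 \<le> B_env * W\<^sup>2" unfolding B_env_def using rhob_pos
    by (intro mult_right_mono) auto
  moreover have "(norm v0)\<^sup>2 / \<mu> \<ge> 0" using mu_pos by simp
  moreover have "f z0 \<le> \<bar>f z0\<bar>" "norm v0 \<ge> 0" by auto
  ultimately have "env x \<le> A_env + B_env * W\<^sup>2" "- env x \<le> A_env + B_env * W\<^sup>2"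
    using up lo unfolding A_env_def by linarith+
  thus ?thesis unfolding W_def abs_le_iff by simp
qed

definition "A_gr = 2 * \<rho>b\<^sup>2 * (norm (z0 - p z0))\<^sup>2"
definition "B_gr = 2 * \<rho>b\<^sup>2 * (1 + \<rho>b/\<mu>)\<^sup>2"

lemma grad_sq: "(norm (\<rho>b *\<^sub>R (x - p x)))\<^sup>2 \<le> A_gr + B_gr * (norm (x - z0))\<^sup>2"
proof -
  define W where "W = norm (x - z0)"
  have "x - p x = (x - z0) + (z0 - p z0) + (p z0 - p x)" by simp
  moreover have "norm ((x - z0) + (z0 - p z0) + (p z0 - p x)) \<le> norm ((x - z0) + (z0 - p z0)) + norm (p z0 - p x)"
    by (rule norm_triangle_ineq)
  moreover have "norm ((x - z0) + (z0 - p z0)) \<le> norm (x - z0) + norm (z0 - p z0)"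
    by (rule norm_triangle_ineq)
  ultimately have "norm (x - p x) \<le> norm (x - z0) + norm (z0 - p z0) + norm (p z0 - p x)"
    by simp
  also have "norm (p z0 - p x) \<le> \<rho>b/\<mu> * W" using p_lip[of z0 x] by (simp add: W_def norm_minus_commute)
  finally have "norm (x - p x) \<le> (1 + \<rho>b/\<mu>) * W + norm (z0 - p z0)"
    by (simp add: W_def algebra_simps)
  hence "(norm (x - p x))\<^sup>2 \<le> ((1 + \<rho>b/\<mu>) * W + norm (z0 - p z0))\<^sup>2"
    by (intro power_mono) auto
  also have "\<dots> \<le> 2 * ((1 + \<rho>b/\<mu>) * W)\<^sup>2 + 2 * (norm (z0 - p z0))\<^sup>2" by (rule sq_sum_le)
  finally have "\<rho>b\<^sup>2 * (norm (x - p x))\<^sup>2 \<le> \<rho>b\<^sup>2 * (2 * ((1 + \<rho>b/\<mu>) * W)\<^sup>2 + 2 * (norm (z0 - p z0))\<^sup>2)"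
    by (intro mult_left_mono) auto
  moreover have "(norm (\<rho>b *\<^sub>R (x - p x)))\<^sup>2 = \<rho>b\<^sup>2 * (norm (x - p x))\<^sup>2"
    by (simp add: power_mult_distrib)
  moreover have "((1 + \<rho>b/\<mu>) * W)\<^sup>2 = (1 + \<rho>b/\<mu>)\<^sup>2 * W\<^sup>2" by (simp add: power_mult_distrib)
  ultimately have "(norm (\<rho>b *\<^sub>R (x - p x)))\<^sup>2 \<le> A_gr + B_gr * W\<^sup>2" unfolding A_gr_def B_gr_def
    by (simp add: algebra_simps)
  thus ?thesis unfolding W_def .
qed

lemma cp_bound: "norm (closest_point X (x - a *\<^sub>R w) - z0) \<le> norm (x - z0) + \<bar>a\<bar> * norm w"
proof -
  have "norm (closest_point X (x - a *\<^sub>R w) - z0) \<le> norm ((x - a *\<^sub>R w) - z0)"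
    using closest_point_lipschitz[OF X_convex X_closed X_ne, of "x - a *\<^sub>R w" z0]
    unfolding closest_point_self[OF z0] by (simp add: dist_norm)
  also have "\<dots> \<le> norm (x - z0) + norm (a *\<^sub>R w)"
  proof -
    have e: "(x - a *\<^sub>R w) - z0 = (x - z0) + (- (a *\<^sub>R w))" by simp
    show ?thesis unfolding e using norm_triangle_ineq[of "x - z0" "- (a *\<^sub>R w)"] by (simp only: norm_minus_cancel)
  qed
  finally show ?thesis by simp
qed

lemma cp_bound2: "(norm (closest_point X (x - a *\<^sub>R w) - z0))\<^sup>2 \<le> 2 * (norm (x - z0))\<^sup>2 + 2 * a\<^sup>2 * (norm w)\<^sup>2"
proof -
  have "(norm (closest_point X (x - a *\<^sub>R w) - z0))\<^sup>2 \<le> (norm (x - z0) + \<bar>a\<bar> * norm w)\<^sup>2"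
    by (intro power_mono cp_bound) auto
  also have "\<dots> \<le> 2 * (norm (x - z0))\<^sup>2 + 2 * (\<bar>a\<bar> * norm w)\<^sup>2" by (rule sq_sum_le)
  finally show ?thesis by (simp add: power_mult_distrib)
qed

end

abbreviation "Phi X G \<alpha> x0 t s \<equiv> sgd_iter X G \<alpha> (\<lambda>i w. w i) x0 t s"

lemma sgd_iter_Phi: "sgd_iter X G \<alpha> \<xi> x0 t \<omega> = Phi X G \<alpha> x0 t (\<lambda>i. \<xi> i \<omega>)"
  by (induction t) auto

lemma Phi_dep: "(\<And>i. i < t \<Longrightarrow> s i = s' i) \<Longrightarrow> Phi X G \<alpha> x0 t s = Phi X G \<alpha> x0 t s'"
  by (induction t) auto

lemma sgd_iter_in: "closed X \<Longrightarrow> X \<noteq> {} \<Longrightarrow> x0 \<in> X \<Longrightarrow> sgd_iter X G \<alpha> \<xi> x0 t \<omega> \<in> X"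
  by (induction t) (auto intro: closest_point_in_set)

lemma closest_point_borel:
  fixes X :: "'a::euclidean_space set"
  assumes "convex X" "closed X" "X \<noteq> {}"
  shows "closest_point X \<in> borel_measurable borel"
proof -
  have "1-lipschitz_on UNIV (closest_point X)"
    by (rule lipschitz_onI) (use closest_point_lipschitz[OF assms] in auto)
  hence "continuous_on UNIV (closest_point X)" by (rule lipschitz_on_continuous_on)
  thus ?thesis by (rule borel_measurable_continuous_onI)
qed

locale sgd =
  fixes \<rho> L :: real and X U :: "'a::euclidean_space set" and f :: "'a \<Rightarrow> real"
    and P :: "'b measure" and M :: "'w measure" and \<xi> :: "nat \<Rightarrow> 'w \<Rightarrow> 'b"
    and G :: "'a \<Rightarrow> 'b \<Rightarrow> 'a" and x0 :: 'a and \<alpha> :: "nat \<Rightarrow> real"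
  assumes rho_pos: "\<rho> > 0"
    and X_ne: "X \<noteq> {}" and X_closed: "closed X" and X_convex: "convex X"
    and f_wc: "weakly_convex \<rho> f"
    and P_prob: "prob_space P"
    and M_prob: "prob_space M"
    and xi_meas: "\<And>i. \<xi> i \<in> measurable M P"
    and xi_distr: "\<And>i. distr M P (\<xi> i) = P"
    and xi_indep: "prob_space.indep_vars M (\<lambda>_. P) \<xi> UNIV"
    and X_sub_U: "X \<subseteq> U"
    and G_meas: "(\<lambda>(x, \<omega>). G x \<omega>) \<in> borel_measurable (restrict_space borel U \<Otimes>\<^sub>M P)"
    and G_integrable: "\<And>x. x \<in> U \<Longrightarrow> integrable P (G x)"
    and G_subgrad: "\<And>x. x \<in> U \<Longrightarrow> (\<integral>\<omega>. G x \<omega> \<partial>P) \<in> subdiff f x"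
    and L_nonneg: "L \<ge> 0"
    and G_bound: "\<And>x. x \<in> X \<Longrightarrow> (\<integral>\<^sup>+\<omega>. ennreal ((norm (G x \<omega>))\<^sup>2) \<partial>P) \<le> ennreal (L\<^sup>2)"
    and x0_in: "x0 \<in> X"
begin

interpretation M: prob_space M by (rule M_prob)
interpretation P: prob_space P by (rule P_prob)

abbreviation "N \<equiv> restrict_space borel X"
abbreviation "x t \<omega> \<equiv> sgd_iter X G \<alpha> \<xi> x0 t \<omega>"

lemma x_in: "x t \<omega> \<in> X" by (rule sgd_iter_in[OF X_closed X_ne x0_in])

lemma Phi_in: "Phi X G \<alpha> x0 t s \<in> X" by (rule sgd_iter_in[OF X_closed X_ne x0_in])

lemma G_meas_X: "(\<lambda>(x, \<omega>). G x \<omega>) \<in> borel_measurable (N \<Otimes>\<^sub>M P)"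
proof -
  have id: "(\<lambda>z. z) \<in> measurable N (restrict_space borel U)"
    using X_sub_U by (intro measurable_restrict_space3) auto
  have "(\<lambda>z. (fst z, snd z)) \<in> measurable (N \<Otimes>\<^sub>M P) (restrict_space borel U \<Otimes>\<^sub>M P)"
    by (intro measurable_Pair measurable_comp[OF measurable_fst id, unfolded comp_def] measurable_snd)
  hence "(\<lambda>z. z) \<in> measurable (N \<Otimes>\<^sub>M P) (restrict_space borel U \<Otimes>\<^sub>M P)" by simp
  from measurable_comp[OF this G_meas] show ?thesis by (simp add: comp_def)
qed


lemma Phi_meas: "Phi X G \<alpha> x0 t \<in> measurable (Pi\<^sub>M {..<t} (\<lambda>_. P)) N"
proof (induction t)
  case 0
  show ?case using x0_in by (simp add: space_restrict_space)
next
  case (Suc t)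
  let ?Pt = "Pi\<^sub>M {..<t} (\<lambda>_. P)" and ?Ps = "Pi\<^sub>M {..<Suc t} (\<lambda>_. P)"
  have r: "(\<lambda>s. restrict s {..<t}) \<in> measurable ?Ps ?Pt"
    by (rule measurable_restrict_subset) auto
  have m1: "(\<lambda>s. Phi X G \<alpha> x0 t (restrict s {..<t})) \<in> measurable ?Ps N"
    using measurable_comp[OF r Suc.IH] by (simp add: comp_def)
  have m1': "(\<lambda>s. Phi X G \<alpha> x0 t s) \<in> measurable ?Ps N"
    by (rule measurable_cong[THEN iffD1, OF _ m1]) (rule Phi_dep, simp)
  have m2: "(\<lambda>s. s t) \<in> measurable ?Ps P"
    by (rule measurable_component_singleton) simp
  have m3: "(\<lambda>s. G (Phi X G \<alpha> x0 t s) (s t)) \<in> borel_measurable ?Ps"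
    using measurable_comp[OF measurable_Pair[OF m1' m2] G_meas_X] by (simp add: comp_def)
  have m1b: "(\<lambda>s. Phi X G \<alpha> x0 t s) \<in> borel_measurable ?Ps"
    using measurable_comp[OF m1' measurable_restrict_space1[OF measurable_ident]] by (simp add: comp_def)
  have m4: "(\<lambda>s. Phi X G \<alpha> x0 t s - \<alpha> t *\<^sub>R G (Phi X G \<alpha> x0 t s) (s t)) \<in> borel_measurable ?Ps"
    using m1b m3 by measurable
  have m5: "(\<lambda>s. closest_point X (Phi X G \<alpha> x0 t s - \<alpha> t *\<^sub>R G (Phi X G \<alpha> x0 t s) (s t))) \<in> borel_measurable ?Ps"
    using measurable_comp[OF m4 closest_point_borel[OF X_convex X_closed X_ne]] by (simp add: comp_def)
  show ?case
    by (simp, rule measurable_restrict_space2) (use m5 closest_point_in_set[OF X_closed X_ne] in auto)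
qed

lemma Phi_meas_UNIV: "Phi X G \<alpha> x0 t \<in> measurable (Pi\<^sub>M UNIV (\<lambda>_. P)) N"
proof -
  have r: "(\<lambda>s. restrict s {..<t}) \<in> measurable (Pi\<^sub>M UNIV (\<lambda>_. P)) (Pi\<^sub>M {..<t} (\<lambda>_. P))"
    by (rule measurable_restrict_subset) auto
  have "(\<lambda>s. Phi X G \<alpha> x0 t (restrict s {..<t})) \<in> measurable (Pi\<^sub>M UNIV (\<lambda>_. P)) N"
    using measurable_comp[OF r Phi_meas] by (simp add: comp_def)
  thus ?thesis by (rule measurable_cong[THEN iffD1, rotated]) (rule Phi_dep, simp)
qed

lemma x_meas: "x t \<in> measurable M N"
proof -
  have "(\<lambda>\<omega>. \<lambda>i. \<xi> i \<omega>) \<in> measurable M (Pi\<^sub>M UNIV (\<lambda>_. P))"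
    using xi_meas by (intro measurable_PiM_single') (auto simp: measurable_def)
  from measurable_comp[OF this Phi_meas_UNIV] show ?thesis
    unfolding sgd_iter_Phi[of X G \<alpha> \<xi>] by (simp add: comp_def)
qed

lemma x_borel: "x t \<in> borel_measurable M"
  using measurable_comp[OF x_meas measurable_restrict_space1[OF measurable_ident]] by (simp add: comp_def)

lemma joint_distr: "distr M N (x t) \<Otimes>\<^sub>M P = distr M (N \<Otimes>\<^sub>M P) (\<lambda>\<omega>. (x t \<omega>, \<xi> t \<omega>))"
proof -
  let ?Pt = "Pi\<^sub>M {..<t} (\<lambda>_. P)" and ?Pt' = "Pi\<^sub>M {t} (\<lambda>_. P)"
  define r1 where "r1 \<omega> = restrict (\<lambda>i. \<xi> i \<omega>) {..<t}" for \<omega>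
  define r2 where "r2 \<omega> = restrict (\<lambda>i. \<xi> i \<omega>) {t}" for \<omega>
  have ind: "M.indep_var ?Pt r1 ?Pt' r2"
    unfolding r1_def r2_def by (rule M.indep_var_restrict[OF xi_indep]) auto
  have xr: "x t \<omega> = Phi X G \<alpha> x0 t (r1 \<omega>)" for \<omega>
    unfolding r1_def by (subst sgd_iter_Phi, rule Phi_dep) simp
  have xir: "\<xi> t \<omega> = r2 \<omega> t" for \<omega> unfolding r2_def by simp
  have xm: "x t \<in> measurable M N" by (rule x_meas)
  have xim: "\<xi> t \<in> measurable M P" by (rule xi_meas)
  interpret D1: prob_space "distr M N (x t)" by (rule M.prob_space_distr[OF xm])
  have J: "(\<lambda>\<omega>. (x t \<omega>, \<xi> t \<omega>)) \<in> measurable M (N \<Otimes>\<^sub>M P)"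
    using xm xim by (rule measurable_Pair)
  show ?thesis
  proof (rule pair_measure_eqI)
    show "sigma_finite_measure (distr M N (x t))" by unfold_locales
    show "sigma_finite_measure P" by unfold_locales
    show "sets (distr M N (x t) \<Otimes>\<^sub>M P) = sets (distr M (N \<Otimes>\<^sub>M P) (\<lambda>\<omega>. (x t \<omega>, \<xi> t \<omega>)))"
      by simp
    fix A B assume A: "A \<in> sets (distr M N (x t))" and B: "B \<in> sets P"
    have A': "A \<in> sets N" using A by simp
    define SA where "SA = Phi X G \<alpha> x0 t -` A \<inter> space ?Pt"
    define SB where "SB = (\<lambda>s. s t) -` B \<inter> space ?Pt'"
    have SA: "SA \<in> sets ?Pt" unfolding SA_def using Phi_meas A' by (rule measurable_sets)
    have SB: "SB \<in> sets ?Pt'" unfolding SB_def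
      using measurable_component_singleton[of t "{t}" "\<lambda>_. P"] B by (rule measurable_sets) simp
    have r1s: "r1 \<omega> \<in> space ?Pt" if "\<omega> \<in> space M" for \<omega>
      using that xi_meas unfolding r1_def by (auto simp: space_PiM measurable_def)
    have r2s: "r2 \<omega> \<in> space ?Pt'" if "\<omega> \<in> space M" for \<omega>
      using that xi_meas unfolding r2_def by (auto simp: space_PiM measurable_def)
    have e1: "x t -` A \<inter> space M = r1 -` SA \<inter> space M"
      using r1s unfolding SA_def by (auto simp: xr)
    have e2: "\<xi> t -` B \<inter> space M = r2 -` SB \<inter> space M"
      using r2s unfolding SB_def by (auto simp: xir)
    have e3: "(\<lambda>\<omega>. (x t \<omega>, \<xi> t \<omega>)) -` (A \<times> B) \<inter> space M = (\<lambda>\<omega>. (r1 \<omega>, r2 \<omega>)) -` (SA \<times> SB) \<inter> space M"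
      using e1 e2 by blast
    have "emeasure (distr M (N \<Otimes>\<^sub>M P) (\<lambda>\<omega>. (x t \<omega>, \<xi> t \<omega>))) (A \<times> B)
        = emeasure M ((\<lambda>\<omega>. (x t \<omega>, \<xi> t \<omega>)) -` (A \<times> B) \<inter> space M)"
      using A' B by (intro emeasure_distr[OF J]) auto
    also have "\<dots> = ennreal (M.prob ((\<lambda>\<omega>. (r1 \<omega>, r2 \<omega>)) -` (SA \<times> SB) \<inter> space M))"
      unfolding e3 by (simp add: M.emeasure_eq_measure)
    also have "\<dots> = ennreal (M.prob (r1 -` SA \<inter> space M) * M.prob (r2 -` SB \<inter> space M))"
      using M.indep_varD[OF ind SA SB] by simp
    also have "\<dots> = emeasure M (x t -` A \<inter> space M) * emeasure M (\<xi> t -` B \<inter> space M)"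
      unfolding e1 e2 by (simp add: M.emeasure_eq_measure ennreal_mult)
    also have "emeasure M (x t -` A \<inter> space M) = emeasure (distr M N (x t)) A"
      using A' by (simp add: emeasure_distr[OF xm])
    also have "emeasure M (\<xi> t -` B \<inter> space M) = emeasure P B"
      using B emeasure_distr[OF xim B] xi_distr[of t] by simp
    finally show "emeasure (distr M N (x t)) A * emeasure P B = emeasure (distr M (N \<Otimes>\<^sub>M P) (\<lambda>\<omega>. (x t \<omega>, \<xi> t \<omega>))) (A \<times> B)"
      by simp
  qed
qed


lemma J_meas: "(\<lambda>\<omega>. (x t \<omega>, \<xi> t \<omega>)) \<in> measurable M (N \<Otimes>\<^sub>M P)"
  using x_meas xi_meas by (rule measurable_Pair)

lemma nn_transfer:
  assumes H: "H \<in> borel_measurable (N \<Otimes>\<^sub>M P)"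
  shows "(\<integral>\<^sup>+\<omega>. H (x t \<omega>, \<xi> t \<omega>) \<partial>M) = (\<integral>\<^sup>+\<omega>. (\<integral>\<^sup>+s. H (x t \<omega>, s) \<partial>P) \<partial>M)"
proof -
  let ?D = "distr M N (x t)"
  have sets_eq: "sets (?D \<Otimes>\<^sub>M P) = sets (N \<Otimes>\<^sub>M P)" by simp
  have HD: "H \<in> borel_measurable (?D \<Otimes>\<^sub>M P)" using H by (simp add: measurable_cong_sets[OF sets_eq refl])
  have Hm: "(\<lambda>a. \<integral>\<^sup>+s. H (a, s) \<partial>P) \<in> borel_measurable N"
    by (rule P.borel_measurable_nn_integral_fst[OF H])
  have "(\<integral>\<^sup>+\<omega>. H (x t \<omega>, \<xi> t \<omega>) \<partial>M) = integral\<^sup>N (distr M (N \<Otimes>\<^sub>M P) (\<lambda>\<omega>. (x t \<omega>, \<xi> t \<omega>))) H"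
    using H by (intro nn_integral_distr[OF J_meas, symmetric]) simp
  also have "\<dots> = integral\<^sup>N (?D \<Otimes>\<^sub>M P) H" by (simp add: joint_distr)
  also have "\<dots> = (\<integral>\<^sup>+a. (\<integral>\<^sup>+s. H (a, s) \<partial>P) \<partial>?D)"
    by (rule P.nn_integral_fst[OF HD, symmetric])
  also have "\<dots> = (\<integral>\<^sup>+\<omega>. (\<integral>\<^sup>+s. H (x t \<omega>, s) \<partial>P) \<partial>M)"
    using Hm by (intro nn_integral_distr[OF x_meas]) simp
  finally show ?thesis .
qed

lemma int_transfer:
  fixes H :: "'a \<times> 'b \<Rightarrow> real"
  assumes H: "H \<in> borel_measurable (N \<Otimes>\<^sub>M P)"
    and int: "integrable M (\<lambda>\<omega>. H (x t \<omega>, \<xi> t \<omega>))"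
  shows "integrable M (\<lambda>\<omega>. \<integral>s. H (x t \<omega>, s) \<partial>P)"
    and "(\<integral>\<omega>. H (x t \<omega>, \<xi> t \<omega>) \<partial>M) = (\<integral>\<omega>. (\<integral>s. H (x t \<omega>, s) \<partial>P) \<partial>M)"
proof -
  let ?D = "distr M N (x t)"
  interpret D: prob_space ?D by (rule M.prob_space_distr[OF x_meas])
  interpret DP: pair_sigma_finite ?D P by unfold_locales
  have sets_eq: "sets (?D \<Otimes>\<^sub>M P) = sets (N \<Otimes>\<^sub>M P)" by simp
  have Hm: "(\<lambda>a. \<integral>s. H (a, s) \<partial>P) \<in> borel_measurable N"
    using P.borel_measurable_lebesgue_integral[of "\<lambda>a s. H (a, s)" N] H by simp
  have "integrable (distr M (N \<Otimes>\<^sub>M P) (\<lambda>\<omega>. (x t \<omega>, \<xi> t \<omega>))) H"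
    using int by (subst integrable_distr_eq[OF J_meas H])
  hence iDP: "integrable (?D \<Otimes>\<^sub>M P) H" by (simp add: joint_distr)
  have "integrable ?D (\<lambda>a. \<integral>s. H (a, s) \<partial>P)" by (rule DP.integrable_fst'[OF iDP])
  thus "integrable M (\<lambda>\<omega>. \<integral>s. H (x t \<omega>, s) \<partial>P)"
    by (subst (asm) integrable_distr_eq[OF x_meas Hm])
  have "(\<integral>\<omega>. H (x t \<omega>, \<xi> t \<omega>) \<partial>M) = integral\<^sup>L (distr M (N \<Otimes>\<^sub>M P) (\<lambda>\<omega>. (x t \<omega>, \<xi> t \<omega>))) H"
    by (rule integral_distr[OF J_meas H, symmetric])
  also have "\<dots> = integral\<^sup>L (?D \<Otimes>\<^sub>M P) H" by (simp add: joint_distr)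
  also have "\<dots> = (\<integral>a. (\<integral>s. H (a, s) \<partial>P) \<partial>?D)" by (rule DP.integral_fst'[OF iDP, symmetric])
  also have "\<dots> = (\<integral>\<omega>. (\<integral>s. H (x t \<omega>, s) \<partial>P) \<partial>M)" by (rule integral_distr[OF x_meas Hm])
  finally show "(\<integral>\<omega>. H (x t \<omega>, \<xi> t \<omega>) \<partial>M) = (\<integral>\<omega>. (\<integral>s. H (x t \<omega>, s) \<partial>P) \<partial>M)" .
qed


interpretation m0: mor \<rho> "2*\<rho>" f X x0 "(\<integral>\<omega>. G x0 \<omega> \<partial>P)"
  by unfold_locales (use rho_pos X_ne X_closed X_convex f_wc x0_in X_sub_U G_subgrad in auto)

lemma Gx_meas: "(\<lambda>\<omega>. G (x t \<omega>) (\<xi> t \<omega>)) \<in> borel_measurable M"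
  using measurable_comp[OF J_meas G_meas_X] by (simp add: comp_def)

lemma G_P_meas: "a \<in> U \<Longrightarrow> G a \<in> borel_measurable P"
  using G_integrable by auto

lemma G_sq_nn: "(\<integral>\<^sup>+\<omega>. ennreal ((norm (G (x t \<omega>) (\<xi> t \<omega>)))\<^sup>2) \<partial>M) \<le> ennreal (L\<^sup>2)"
proof -
  have H: "(\<lambda>z. ennreal ((norm (G (fst z) (snd z)))\<^sup>2)) \<in> borel_measurable (N \<Otimes>\<^sub>M P)"
    using G_meas_X by (simp add: case_prod_beta' measurable_compose[where f="\<lambda>z. G (fst z) (snd z)"])
  have "(\<integral>\<^sup>+\<omega>. ennreal ((norm (G (x t \<omega>) (\<xi> t \<omega>)))\<^sup>2) \<partial>M)
      = (\<integral>\<^sup>+\<omega>. (\<integral>\<^sup>+s. ennreal ((norm (G (x t \<omega>) s))\<^sup>2) \<partial>P) \<partial>M)"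
    using nn_transfer[OF H, of t] by simp
  also have "\<dots> \<le> (\<integral>\<^sup>+\<omega>. ennreal (L\<^sup>2) \<partial>M)"
    by (intro nn_integral_mono G_bound x_in)
  also have "\<dots> = ennreal (L\<^sup>2)" by (simp add: M.emeasure_space_1)
  finally show ?thesis .
qed

lemma G_sq_int: "integrable M (\<lambda>\<omega>. (norm (G (x t \<omega>) (\<xi> t \<omega>)))\<^sup>2)"
proof (rule integrableI_bounded)
  show "(\<lambda>\<omega>. (norm (G (x t \<omega>) (\<xi> t \<omega>)))\<^sup>2) \<in> borel_measurable M"
    using Gx_meas by measurable
  have "(\<integral>\<^sup>+\<omega>. ennreal (norm ((norm (G (x t \<omega>) (\<xi> t \<omega>)))\<^sup>2)) \<partial>M) \<le> ennreal (L\<^sup>2)"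
    using G_sq_nn by simp
  thus "(\<integral>\<^sup>+\<omega>. ennreal (norm ((norm (G (x t \<omega>) (\<xi> t \<omega>)))\<^sup>2)) \<partial>M) < \<infinity>"
    using le_less_trans by fastforce
qed

lemma G_sq_P: assumes a: "a \<in> X"
  shows "integrable P (\<lambda>s. (norm (G a s))\<^sup>2)" and "(\<integral>s. (norm (G a s))\<^sup>2 \<partial>P) \<le> L\<^sup>2"
proof -
  have m: "(\<lambda>s. (norm (G a s))\<^sup>2) \<in> borel_measurable P" using G_P_meas[of a] a X_sub_U by (auto intro!: borel_measurable_power borel_measurable_norm)
  have b: "(\<integral>\<^sup>+s. ennreal ((norm (G a s))\<^sup>2) \<partial>P) \<le> ennreal (L\<^sup>2)" by (rule G_bound[OF a])
  show "integrable P (\<lambda>s. (norm (G a s))\<^sup>2)"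
    by (rule integrableI_bounded[OF m]) (use b le_less_trans in fastforce)
  have "(\<integral>s. (norm (G a s))\<^sup>2 \<partial>P) = enn2real (\<integral>\<^sup>+s. ennreal ((norm (G a s))\<^sup>2) \<partial>P)"
    by (rule integral_eq_nn_integral[OF m]) auto
  also have "\<dots> \<le> enn2real (ennreal (L\<^sup>2))" using b by (intro enn2real_mono) auto
  finally show "(\<integral>s. (norm (G a s))\<^sup>2 \<partial>P) \<le> L\<^sup>2" by simp
qed

lemma x_Suc: "x (Suc t) \<omega> = closest_point X (x t \<omega> - \<alpha> t *\<^sub>R G (x t \<omega>) (\<xi> t \<omega>))"
  by simp

lemma m2: "integrable M (\<lambda>\<omega>. (norm (x t \<omega> - x0))\<^sup>2)"
proof (induction t)
  case 0 show ?case by simp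
next
  case (Suc t)
  have dom: "integrable M (\<lambda>\<omega>. 2 * (norm (x t \<omega> - x0))\<^sup>2 + 2 * (\<alpha> t)\<^sup>2 * (norm (G (x t \<omega>) (\<xi> t \<omega>)))\<^sup>2)"
    by (rule Bochner_Integration.integrable_add; rule Bochner_Integration.integrable_mult_right) (rule Suc.IH, rule G_sq_int)
  show ?case
  proof (rule Bochner_Integration.integrable_bound[OF dom])
    show "(\<lambda>\<omega>. (norm (x (Suc t) \<omega> - x0))\<^sup>2) \<in> borel_measurable M"
      using x_borel[of "Suc t"] by measurable
    show "AE \<omega> in M. norm ((norm (x (Suc t) \<omega> - x0))\<^sup>2) \<le> norm (2 * (norm (x t \<omega> - x0))\<^sup>2 + 2 * (\<alpha> t)\<^sup>2 * (norm (G (x t \<omega>) (\<xi> t \<omega>)))\<^sup>2)"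
      using m0.cp_bound2 by (auto simp del: sgd_iter.simps simp: x_Suc)
  qed
qed

end

locale sgdb = sgd + fixes \<rho>b :: real assumes rhob: "\<rho>b > \<rho>"
begin

sublocale m: mor \<rho> \<rho>b f X x0 "(\<integral>\<omega>. G x0 \<omega> \<partial>P)"
  by unfold_locales (use rho_pos rhob X_ne X_closed X_convex f_wc x0_in X_sub_U G_subgrad in auto)

interpretation M: prob_space M by (rule M_prob)
interpretation P: prob_space P by (rule P_prob)

lemma env_borel: "m.env \<in> borel_measurable borel"
  by (rule borel_measurable_continuous_onI[OF m.env_cont])

lemma p_borel: "m.p \<in> borel_measurable borel"
  by (rule borel_measurable_continuous_onI[OF m.p_cont])

lemma env_int: "integrable M (\<lambda>\<omega>. m.env (x t \<omega>))"
proof (rule Bochner_Integration.integrable_bound)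
  show "integrable M (\<lambda>\<omega>. m.A_env + m.B_env * (norm (x t \<omega> - x0))\<^sup>2)"
    by (rule Bochner_Integration.integrable_add; (rule Bochner_Integration.integrable_mult_right)?) (auto intro: m2)
  show "(\<lambda>\<omega>. m.env (x t \<omega>)) \<in> borel_measurable M"
    using measurable_comp[OF x_borel env_borel] by (simp add: comp_def)
  have "m.A_env \<ge> 0" "m.B_env \<ge> 0" using m.mu_pos rho_pos rhob unfolding m.A_env_def m.B_env_def by auto
  thus "AE \<omega> in M. norm (m.env (x t \<omega>)) \<le> norm (m.A_env + m.B_env * (norm (x t \<omega> - x0))\<^sup>2)"
    using m.env_abs by auto
qed

lemma gr_int: "integrable M (\<lambda>\<omega>. (norm (\<rho>b *\<^sub>R (x t \<omega> - m.p (x t \<omega>))))\<^sup>2)"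
proof (rule Bochner_Integration.integrable_bound)
  show "integrable M (\<lambda>\<omega>. m.A_gr + m.B_gr * (norm (x t \<omega> - x0))\<^sup>2)"
    by (rule Bochner_Integration.integrable_add; (rule Bochner_Integration.integrable_mult_right)?) (auto intro: m2)
  have pm: "(\<lambda>\<omega>. m.p (x t \<omega>)) \<in> borel_measurable M"
    using measurable_comp[OF x_borel p_borel] by (simp add: comp_def)
  show "(\<lambda>\<omega>. (norm (\<rho>b *\<^sub>R (x t \<omega> - m.p (x t \<omega>))))\<^sup>2) \<in> borel_measurable M"
    using pm x_borel by measurable
  have "m.A_gr \<ge> 0" "m.B_gr \<ge> 0" unfolding m.A_gr_def m.B_gr_def by auto
  thus "AE \<omega> in M. norm ((norm (\<rho>b *\<^sub>R (x t \<omega> - m.p (x t \<omega>))))\<^sup>2) \<le> norm (m.A_gr + m.B_gr * (norm (x t \<omega> - x0))\<^sup>2)"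
    using m.grad_sq by auto
qed

lemma cp_borel: "closest_point X \<in> borel_measurable borel"
  by (rule closest_point_borel[OF X_convex X_closed X_ne])

lemma per_x:
  assumes a: "a \<in> X" and c: "c \<ge> 0"
  shows "integrable P (\<lambda>s. m.env (closest_point X (a - c *\<^sub>R G a s)))"
    and "(\<integral>s. m.env (closest_point X (a - c *\<^sub>R G a s)) \<partial>P)
          \<le> m.env a - c * m.\<mu> / \<rho>b * (norm (\<rho>b *\<^sub>R (a - m.p a)))\<^sup>2 + c\<^sup>2 * \<rho>b * L\<^sup>2 / 2"
proof -
  have aU: "a \<in> U" using a X_sub_U by auto
  have Gm: "G a \<in> borel_measurable P" using G_P_meas[OF aU] .
  have Gi: "integrable P (G a)" by (rule G_integrable[OF aU])
  note Gsq = G_sq_P[OF a]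
  define d where "d = a - m.p a"
  have lm: "(\<lambda>s. m.env (closest_point X (a - c *\<^sub>R G a s))) \<in> borel_measurable P"
  proof -
    have "(\<lambda>s. a - c *\<^sub>R G a s) \<in> borel_measurable P" using Gm by measurable
    from measurable_comp[OF measurable_comp[OF this cp_borel] env_borel] show ?thesis by (simp add: comp_def)
  qed
  show li: "integrable P (\<lambda>s. m.env (closest_point X (a - c *\<^sub>R G a s)))"
  proof (rule Bochner_Integration.integrable_bound[OF _ lm])
    show "integrable P (\<lambda>s. m.A_env + m.B_env * (2 * (norm (a - x0))\<^sup>2 + 2 * c\<^sup>2 * (norm (G a s))\<^sup>2))"
      using Gsq(1) by (intro Bochner_Integration.integrable_add Bochner_Integration.integrable_mult_right) auto
    have A0: "m.A_env \<ge> 0" "m.B_env \<ge> 0" using m.mu_pos rho_pos rhob unfolding m.A_env_def m.B_env_def by auto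
    show "AE s in P. norm (m.env (closest_point X (a - c *\<^sub>R G a s))) \<le> norm (m.A_env + m.B_env * (2 * (norm (a - x0))\<^sup>2 + 2 * c\<^sup>2 * (norm (G a s))\<^sup>2))"
    proof (rule AE_I2)
      fix s
      have "\<bar>m.env (closest_point X (a - c *\<^sub>R G a s))\<bar> \<le> m.A_env + m.B_env * (norm (closest_point X (a - c *\<^sub>R G a s) - x0))\<^sup>2"
        by (rule m.env_abs)
      also have "\<dots> \<le> m.A_env + m.B_env * (2 * (norm (a - x0))\<^sup>2 + 2 * c\<^sup>2 * (norm (G a s))\<^sup>2)"
        using A0 m.cp_bound2 by (intro add_left_mono mult_left_mono) auto
      finally show "norm (m.env (closest_point X (a - c *\<^sub>R G a s))) \<le> norm (m.A_env + m.B_env * (2 * (norm (a - x0))\<^sup>2 + 2 * c\<^sup>2 * (norm (G a s))\<^sup>2))"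
        by simp
    qed
  qed
  have ri: "integrable P (\<lambda>s. m.env a - \<rho>b * c * inner (G a s) d + \<rho>b * c\<^sup>2 / 2 * (norm (G a s))\<^sup>2)"
    using Gi Gsq(1) by (intro Bochner_Integration.integrable_add Bochner_Integration.integrable_diff
        Bochner_Integration.integrable_mult_right integrable_inner_left) auto
  have "(\<integral>s. m.env (closest_point X (a - c *\<^sub>R G a s)) \<partial>P)
        \<le> (\<integral>s. m.env a - \<rho>b * c * inner (G a s) d + \<rho>b * c\<^sup>2 / 2 * (norm (G a s))\<^sup>2 \<partial>P)"
    by (rule integral_mono[OF li ri]) (use m.step_ineq in \<open>simp add: d_def\<close>)
  also have "\<dots> = m.env a - \<rho>b * c * inner (\<integral>s. G a s \<partial>P) d + \<rho>b * c\<^sup>2 / 2 * (\<integral>s. (norm (G a s))\<^sup>2 \<partial>P)"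
    using Gi Gsq(1) by (simp add: Bochner_Integration.integral_add Bochner_Integration.integral_diff
        integrable_inner_left integral_inner_left P.prob_space)
  also have "\<dots> \<le> m.env a - \<rho>b * c * (m.\<mu> * (norm d)\<^sup>2) + \<rho>b * c\<^sup>2 / 2 * L\<^sup>2"
  proof -
    have "inner (\<integral>s. G a s \<partial>P) d \<ge> m.\<mu> * (norm d)\<^sup>2"
      unfolding d_def by (rule m.subgrad_prox[OF a G_subgrad[OF aU]])
    hence "\<rho>b * c * inner (\<integral>s. G a s \<partial>P) d \<ge> \<rho>b * c * (m.\<mu> * (norm d)\<^sup>2)"
      using c rho_pos rhob by (intro mult_left_mono) auto
    moreover have "\<rho>b * c\<^sup>2 / 2 * (\<integral>s. (norm (G a s))\<^sup>2 \<partial>P) \<le> \<rho>b * c\<^sup>2 / 2 * L\<^sup>2"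
      using Gsq(2) rho_pos rhob by (intro mult_left_mono) auto
    ultimately show ?thesis by linarith
  qed
  also have "\<rho>b * c * (m.\<mu> * (norm d)\<^sup>2) = c * m.\<mu> / \<rho>b * (norm (\<rho>b *\<^sub>R d))\<^sup>2"
    using rho_pos rhob by (simp add: power_mult_distrib power2_eq_square field_simps)
  finally show "(\<integral>s. m.env (closest_point X (a - c *\<^sub>R G a s)) \<partial>P)
          \<le> m.env a - c * m.\<mu> / \<rho>b * (norm (\<rho>b *\<^sub>R (a - m.p a)))\<^sup>2 + c\<^sup>2 * \<rho>b * L\<^sup>2 / 2"
    by (simp add: d_def algebra_simps)
qed


lemma step_E:
  assumes c: "\<alpha> t \<ge> 0"
  shows "(\<integral>\<omega>. m.env (x (Suc t) \<omega>) \<partial>M) \<le> (\<integral>\<omega>. m.env (x t \<omega>) \<partial>M)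
     - \<alpha> t * m.\<mu> / \<rho>b * (\<integral>\<omega>. (norm (\<rho>b *\<^sub>R (x t \<omega> - m.p (x t \<omega>))))\<^sup>2 \<partial>M) + (\<alpha> t)\<^sup>2 * \<rho>b * L\<^sup>2 / 2"
proof -
  define H where "H z = m.env (closest_point X (fst z - \<alpha> t *\<^sub>R G (fst z) (snd z)))" for z
  have Gm: "(\<lambda>z. G (fst z) (snd z)) \<in> borel_measurable (N \<Otimes>\<^sub>M P)"
    using G_meas_X by (simp add: case_prod_beta')
  have fm: "(\<lambda>z. fst z) \<in> borel_measurable (N \<Otimes>\<^sub>M P)"
    using measurable_comp[OF measurable_fst measurable_restrict_space1[OF measurable_ident]] by (simp add: comp_def)
  have Hm: "H \<in> borel_measurable (N \<Otimes>\<^sub>M P)"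
  proof -
    have "(\<lambda>z. fst z - \<alpha> t *\<^sub>R G (fst z) (snd z)) \<in> borel_measurable (N \<Otimes>\<^sub>M P)"
      using fm Gm by measurable
    from measurable_comp[OF measurable_comp[OF this cp_borel] env_borel] show ?thesis
      unfolding H_def[abs_def] by (simp add: comp_def)
  qed
  have eq: "m.env (x (Suc t) \<omega>) = H (x t \<omega>, \<xi> t \<omega>)" for \<omega> by (simp add: H_def)
  have iH: "integrable M (\<lambda>\<omega>. H (x t \<omega>, \<xi> t \<omega>))" using env_int[of "Suc t"] unfolding eq .
  note tr = int_transfer[OF Hm iH]
  have ri: "integrable M (\<lambda>\<omega>. m.env (x t \<omega>) - \<alpha> t * m.\<mu> / \<rho>b * (norm (\<rho>b *\<^sub>R (x t \<omega> - m.p (x t \<omega>))))\<^sup>2 + (\<alpha> t)\<^sup>2 * \<rho>b * L\<^sup>2 / 2)"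
    using env_int gr_int by (intro Bochner_Integration.integrable_add Bochner_Integration.integrable_diff
        Bochner_Integration.integrable_mult_right) auto
  have "(\<integral>\<omega>. m.env (x (Suc t) \<omega>) \<partial>M) = (\<integral>\<omega>. (\<integral>s. H (x t \<omega>, s) \<partial>P) \<partial>M)"
    unfolding eq by (rule tr(2))
  also have "\<dots> \<le> (\<integral>\<omega>. m.env (x t \<omega>) - \<alpha> t * m.\<mu> / \<rho>b * (norm (\<rho>b *\<^sub>R (x t \<omega> - m.p (x t \<omega>))))\<^sup>2 + (\<alpha> t)\<^sup>2 * \<rho>b * L\<^sup>2 / 2 \<partial>M)"
  proof (rule integral_mono[OF tr(1) ri])
    fix \<omega>
    show "(\<integral>s. H (x t \<omega>, s) \<partial>P) \<le> m.env (x t \<omega>) - \<alpha> t * m.\<mu> / \<rho>b * (norm (\<rho>b *\<^sub>R (x t \<omega> - m.p (x t \<omega>))))\<^sup>2 + (\<alpha> t)\<^sup>2 * \<rho>b * L\<^sup>2 / 2"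
      using per_x(2)[OF x_in c] unfolding H_def by simp
  qed
  also have "\<dots> = (\<integral>\<omega>. m.env (x t \<omega>) \<partial>M)
     - \<alpha> t * m.\<mu> / \<rho>b * (\<integral>\<omega>. (norm (\<rho>b *\<^sub>R (x t \<omega> - m.p (x t \<omega>))))\<^sup>2 \<partial>M) + (\<alpha> t)\<^sup>2 * \<rho>b * L\<^sup>2 / 2"
    using env_int gr_int by (simp add: Bochner_Integration.integral_add Bochner_Integration.integral_diff M.prob_space)
  finally show ?thesis .
qed

end

locale sgdt = sgd +
  fixes T :: nat and tstar
  assumes alpha_nonneg: "\<And>t. t \<le> T \<Longrightarrow> \<alpha> t \<ge> 0"
    and alpha_sum_pos: "(\<Sum>t\<le>T. \<alpha> t) > 0"
    and tstar_meas: "tstar \<in> measurable M (count_space UNIV)"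
    and tstar_distr: "\<And>t. t \<le> T \<Longrightarrow>
        measure M {\<omega> \<in> space M. tstar \<omega> = t} = \<alpha> t / (\<Sum>i\<le>T. \<alpha> i)"
    and tstar_indep: "prob_space.indep_set M
        (sets (vimage_algebra (space M) tstar (count_space UNIV)))
        (sets (vimage_algebra (space M) (\<lambda>\<omega> i. \<xi> i \<omega>) (Pi\<^sub>M UNIV (\<lambda>_. P))))"
begin

interpretation M: prob_space M by (rule M_prob)
interpretation P: prob_space P by (rule P_prob)

lemma ind_meas: "(\<lambda>\<omega>. indicator {t} (tstar \<omega>) :: real) \<in> borel_measurable M"
  using measurable_comp[OF tstar_meas, of "\<lambda>n. indicator {t} n :: real" borel] by (simp add: comp_def)

lemma int_ind: "(\<integral>\<omega>. (indicator {t} (tstar \<omega>) :: real) \<partial>M) = measure M {\<omega> \<in> space M. tstar \<omega> = t}"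
proof -
  have "(\<integral>\<omega>. (indicator {t} (tstar \<omega>) :: real) \<partial>M) = (\<integral>\<omega>. indicator {\<omega> \<in> space M. tstar \<omega> = t} \<omega> \<partial>M)"
    by (rule Bochner_Integration.integral_cong) (auto simp: indicator_def)
  also have "\<dots> = measure M ({\<omega> \<in> space M. tstar \<omega> = t} \<inter> space M)" by simp
  also have "{\<omega> \<in> space M. tstar \<omega> = t} \<inter> space M = {\<omega> \<in> space M. tstar \<omega> = t}" by auto
  finally show ?thesis .
qed

lemma tstar_le_AE: "AE \<omega> in M. tstar \<omega> \<le> T"
proof -
  let ?S = "\<Sum>i\<le>T. \<alpha> i"
  have ev: "{\<omega> \<in> space M. tstar \<omega> \<le> T} \<in> sets M"
    using tstar_meas by measurable
  have e0: "{\<omega> \<in> space M. tstar \<omega> \<le> T} \<inter> space M = {\<omega> \<in> space M. tstar \<omega> \<le> T}" by auto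
  have "measure M {\<omega> \<in> space M. tstar \<omega> \<le> T} = (\<integral>\<omega>. indicator {\<omega> \<in> space M. tstar \<omega> \<le> T} \<omega> \<partial>M)"
    using Bochner_Integration.integral_indicator[of M "{\<omega> \<in> space M. tstar \<omega> \<le> T}"] e0 by simp
  also have "\<dots> = (\<integral>\<omega>. (\<Sum>t\<le>T. (indicator {t} (tstar \<omega>) :: real)) \<partial>M)"
    by (rule Bochner_Integration.integral_cong) (auto simp: indicator_def)
  also have "\<dots> = (\<Sum>t\<le>T. (\<integral>\<omega>. (indicator {t} (tstar \<omega>) :: real) \<partial>M))"
    by (rule Bochner_Integration.integral_sum) (auto intro!: M.integrable_const_bound[where B=1] ind_meas)
  also have "\<dots> = (\<Sum>t\<le>T. \<alpha> t / ?S)" by (simp add: int_ind tstar_distr)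
  also have "\<dots> = 1" using alpha_sum_pos by (simp add: sum_divide_distrib[symmetric])
  finally have "M.prob {\<omega> \<in> space M. tstar \<omega> \<le> T} = 1" .
  from M.AE_prob_1[OF this] show ?thesis by auto
qed

lemma indep_ind:
  assumes k: "k \<in> borel_measurable borel"
  shows "M.indep_var borel (\<lambda>\<omega>. indicator {t} (tstar \<omega>) :: real) borel (\<lambda>\<omega>. k (x t \<omega>))"
proof -
  define \<Xi> where "\<Xi> \<omega> = (\<lambda>i. \<xi> i \<omega>)" for \<omega>
  have \<Xi>m: "\<Xi> \<in> measurable M (Pi\<^sub>M UNIV (\<lambda>_. P))"
    unfolding \<Xi>_def using xi_meas by (intro measurable_PiM_single') (auto simp: measurable_def)
  have km: "(\<lambda>s. k (Phi X G \<alpha> x0 t s)) \<in> borel_measurable (Pi\<^sub>M UNIV (\<lambda>_. P))"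
    using measurable_comp[OF measurable_comp[OF Phi_meas_UNIV measurable_restrict_space1[OF measurable_ident]] k]
    by (simp add: comp_def)
  have xk: "(\<lambda>\<omega>. k (x t \<omega>)) \<in> borel_measurable M"
    using measurable_comp[OF x_borel k] by (simp add: comp_def)
  have ind0: "M.indep_sets (case_bool (sets (vimage_algebra (space M) tstar (count_space UNIV)))
        (sets (vimage_algebra (space M) \<Xi> (Pi\<^sub>M UNIV (\<lambda>_. P))))) UNIV"
    using tstar_indep unfolding M.indep_set_def \<Xi>_def .
  have s1: "sigma_sets (space M) {(\<lambda>\<omega>. indicator {t} (tstar \<omega>) :: real) -` A \<inter> space M |A. A \<in> sets borel}
      \<subseteq> sets (vimage_algebra (space M) tstar (count_space UNIV))"
    unfolding sets_vimage_algebra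
  proof (rule sigma_sets_mono', safe)
    fix A :: "real set" assume "A \<in> sets borel"
    have "(\<lambda>\<omega>. indicator {t} (tstar \<omega>) :: real) -` A \<inter> space M = tstar -` ((\<lambda>n. indicator {t} n :: real) -` A) \<inter> space M"
      by auto
    thus "\<exists>B. (\<lambda>\<omega>. indicator {t} (tstar \<omega>) :: real) -` A \<inter> space M = tstar -` B \<inter> space M \<and> B \<in> sets (count_space UNIV)"
      by (intro exI[of _ "(\<lambda>n. indicator {t} n :: real) -` A"]) simp
  qed
  have s2: "sigma_sets (space M) {(\<lambda>\<omega>. k (x t \<omega>)) -` A \<inter> space M |A. A \<in> sets borel}
      \<subseteq> sets (vimage_algebra (space M) \<Xi> (Pi\<^sub>M UNIV (\<lambda>_. P)))"
    unfolding sets_vimage_algebra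
  proof (rule sigma_sets_mono', safe)
    fix A :: "real set" assume A: "A \<in> sets borel"
    have "(\<lambda>\<omega>. k (x t \<omega>)) -` A \<inter> space M = \<Xi> -` ((\<lambda>s. k (Phi X G \<alpha> x0 t s)) -` A \<inter> space (Pi\<^sub>M UNIV (\<lambda>_. P))) \<inter> space M"
      using measurable_space[OF \<Xi>m] by (auto simp: \<Xi>_def sgd_iter_Phi[of X G \<alpha> \<xi>])
    moreover have "(\<lambda>s. k (Phi X G \<alpha> x0 t s)) -` A \<inter> space (Pi\<^sub>M UNIV (\<lambda>_. P)) \<in> sets (Pi\<^sub>M UNIV (\<lambda>_. P))"
      using km A by (rule measurable_sets)
    ultimately show "\<exists>B. (\<lambda>\<omega>. k (x t \<omega>)) -` A \<inter> space M = \<Xi> -` B \<inter> space M \<and> B \<in> sets (Pi\<^sub>M UNIV (\<lambda>_. P))"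
      by (intro exI[of _ "(\<lambda>s. k (Phi X G \<alpha> x0 t s)) -` A \<inter> space (Pi\<^sub>M UNIV (\<lambda>_. P))"] conjI)
  qed
  show ?thesis
    unfolding M.indep_var_eq
  proof (intro conjI)
    show "M.random_variable borel (\<lambda>\<omega>. indicator {t} (tstar \<omega>) :: real)" using ind_meas by auto
    show "M.random_variable borel (\<lambda>\<omega>. k (x t \<omega>))" using xk by auto
    show "M.indep_set
     (sigma_sets (space M) {(\<lambda>\<omega>. indicator {t} (tstar \<omega>) :: real) -` A \<inter> space M |A. A \<in> sets borel})
     (sigma_sets (space M) {(\<lambda>\<omega>. k (x t \<omega>)) -` A \<inter> space M |A. A \<in> sets borel})"
      unfolding M.indep_set_def
      by (rule M.indep_sets_mono_sets[OF ind0]) (use s1 s2 in \<open>auto split: bool.split\<close>)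
  qed
qed

lemma tstar_sum:
  assumes k: "k \<in> borel_measurable borel" and ki: "\<And>t. integrable M (\<lambda>\<omega>. k (x t \<omega>))"
  shows "(\<integral>\<omega>. k (x (tstar \<omega>) \<omega>) \<partial>M) = (\<Sum>t\<le>T. \<alpha> t / (\<Sum>i\<le>T. \<alpha> i) * (\<integral>\<omega>. k (x t \<omega>) \<partial>M))"
proof -
  have xk: "(\<lambda>\<omega>. k (x t \<omega>)) \<in> borel_measurable M" for t
    using measurable_comp[OF x_borel k] by (simp add: comp_def)
  have m1: "(\<lambda>\<omega>. k (x (tstar \<omega>) \<omega>)) \<in> borel_measurable M"
    by (rule measurable_compose_countable[OF xk tstar_meas])
  have "(\<integral>\<omega>. k (x (tstar \<omega>) \<omega>) \<partial>M) = (\<integral>\<omega>. (\<Sum>t\<le>T. indicator {t} (tstar \<omega>) * k (x t \<omega>)) \<partial>M)"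
  proof (rule integral_cong_AE[OF m1])
    show "(\<lambda>\<omega>. \<Sum>t\<le>T. indicator {t} (tstar \<omega>) * k (x t \<omega>)) \<in> borel_measurable M"
      using ind_meas xk by measurable
    show "AE \<omega> in M. k (x (tstar \<omega>) \<omega>) = (\<Sum>t\<le>T. indicator {t} (tstar \<omega>) * k (x t \<omega>))"
      using tstar_le_AE
    proof (rule AE_mp, intro AE_I2 impI)
      fix \<omega> assume "tstar \<omega> \<le> T"
      thus "k (x (tstar \<omega>) \<omega>) = (\<Sum>t\<le>T. indicator {t} (tstar \<omega>) * k (x t \<omega>))"
        by (simp add: indicator_def if_distrib cong: if_cong)
    qed
  qed
  also have "\<dots> = (\<Sum>t\<le>T. (\<integral>\<omega>. indicator {t} (tstar \<omega>) * k (x t \<omega>) \<partial>M))"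
  proof (rule Bochner_Integration.integral_sum)
    fix t
    show "integrable M (\<lambda>\<omega>. indicator {t} (tstar \<omega>) * k (x t \<omega>))"
      by (rule M.indep_var_integrable[OF indep_ind[OF k] _ ki])
         (auto intro!: M.integrable_const_bound[where B=1] ind_meas)
  qed
  also have "\<dots> = (\<Sum>t\<le>T. \<alpha> t / (\<Sum>i\<le>T. \<alpha> i) * (\<integral>\<omega>. k (x t \<omega>) \<partial>M))"
  proof (rule sum.cong[OF refl])
    fix t assume t: "t \<in> {..T}"
    have "(\<integral>\<omega>. indicator {t} (tstar \<omega>) * k (x t \<omega>) \<partial>M)
        = (\<integral>\<omega>. (indicator {t} (tstar \<omega>) :: real) \<partial>M) * (\<integral>\<omega>. k (x t \<omega>) \<partial>M)"
      by (rule M.indep_var_lebesgue_integral[OF indep_ind[OF k] _ ki])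
         (auto intro!: M.integrable_const_bound[where B=1] ind_meas)
    thus "(\<integral>\<omega>. indicator {t} (tstar \<omega>) * k (x t \<omega>) \<partial>M) = \<alpha> t / (\<Sum>i\<le>T. \<alpha> i) * (\<integral>\<omega>. k (x t \<omega>) \<partial>M)"
      using t by (simp add: int_ind tstar_distr)
  qed
  finally show ?thesis .
qed

end

locale sgdtb = sgdt + sgdb
begin

interpretation M: prob_space M by (rule M_prob)

definition "E t = (\<integral>\<omega>. m.env (x t \<omega>) \<partial>M)"
definition "D t = (\<integral>\<omega>. (norm (\<rho>b *\<^sub>R (x t \<omega> - m.p (x t \<omega>))))\<^sup>2 \<partial>M)"
definition "S = (\<Sum>i\<le>T. \<alpha> i)"

lemma D_nonneg: "D t \<ge> 0" unfolding D_def by simp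

lemma telescope:
  "n \<le> Suc T \<Longrightarrow> (\<Sum>t<n. \<alpha> t * m.\<mu> / \<rho>b * D t) \<le> E 0 - E n + \<rho>b * L\<^sup>2 / 2 * (\<Sum>t<n. (\<alpha> t)\<^sup>2)"
proof (induction n)
  case 0 thus ?case by simp
next
  case (Suc n)
  have a: "\<alpha> n \<ge> 0" using Suc.prems alpha_nonneg by simp
  have "E (Suc n) \<le> E n - \<alpha> n * m.\<mu> / \<rho>b * D n + (\<alpha> n)\<^sup>2 * \<rho>b * L\<^sup>2 / 2"
    using step_E[OF a] unfolding E_def D_def .
  moreover have "(\<Sum>t<n. \<alpha> t * m.\<mu> / \<rho>b * D t) \<le> E 0 - E n + \<rho>b * L\<^sup>2 / 2 * (\<Sum>t<n. (\<alpha> t)\<^sup>2)"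
    using Suc by simp
  ultimately show ?case by (simp add: algebra_simps)
qed

lemma E0: "E 0 = m.env x0" unfolding E_def by (simp add: M.prob_space)

lemma E_low: assumes "(INF y. phi_of f X y) = ereal c" shows "E t \<ge> c"
proof -
  have "c \<le> m.env z" for z using m.env_ge_inf[of z] assms by simp
  hence "(\<integral>\<omega>. c \<partial>M) \<le> E t" unfolding E_def by (intro integral_mono env_int) auto
  thus ?thesis by (simp add: M.prob_space)
qed

lemma tstar_D: "(\<integral>\<omega>. (norm (\<rho>b *\<^sub>R (x (tstar \<omega>) \<omega> - m.p (x (tstar \<omega>) \<omega>))))\<^sup>2 \<partial>M) = (\<Sum>t\<le>T. \<alpha> t / S * D t)"
proof -
  have k: "(\<lambda>z. (norm (\<rho>b *\<^sub>R (z - m.p z)))\<^sup>2) \<in> borel_measurable borel"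
    using p_borel by measurable
  show ?thesis unfolding D_def S_def
    by (rule tstar_sum[OF k]) (use gr_int in auto)
qed

lemma claim2_real:
  assumes "(INF y. phi_of f X y) = ereal c"
  shows "(\<Sum>t\<le>T. \<alpha> t / S * D t) \<le> \<rho>b / m.\<mu> * ((m.env x0 - c + \<rho>b * L\<^sup>2 / 2 * (\<Sum>t\<le>T. (\<alpha> t)\<^sup>2)) / S)"
proof -
  have S: "S > 0" using alpha_sum_pos unfolding S_def .
  have tel: "(\<Sum>t\<le>T. \<alpha> t * m.\<mu> / \<rho>b * D t) \<le> E 0 - E (Suc T) + \<rho>b * L\<^sup>2 / 2 * (\<Sum>t\<le>T. (\<alpha> t)\<^sup>2)"
    using telescope[of "Suc T"] by (simp add: lessThan_Suc_atMost)
  have "(\<Sum>t\<le>T. \<alpha> t / S * D t) = \<rho>b / m.\<mu> / S * (\<Sum>t\<le>T. \<alpha> t * m.\<mu> / \<rho>b * D t)"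
    using S m.mu_pos m.rhob_pos by (simp add: sum_distrib_left field_simps)
  also have "\<dots> \<le> \<rho>b / m.\<mu> / S * (m.env x0 - c + \<rho>b * L\<^sup>2 / 2 * (\<Sum>t\<le>T. (\<alpha> t)\<^sup>2))"
    using tel E_low[OF assms, of "Suc T"] E0 S m.mu_pos m.rhob_pos
    by (intro mult_left_mono) auto
  also have "\<dots> = \<rho>b / m.\<mu> * ((m.env x0 - c + \<rho>b * L\<^sup>2 / 2 * (\<Sum>t\<le>T. (\<alpha> t)\<^sup>2)) / S)"
    by simp
  finally show ?thesis .
qed

end

theorem theorem3p1:
  fixes \<rho> L :: real
    and X U :: "'a::euclidean_space set"
    and f :: "'a \<Rightarrow> real"
    and P :: "'b measure"
    and M :: "'w measure"
    and \<xi> :: "nat \<Rightarrow> 'w \<Rightarrow> 'b"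
    and G :: "'a \<Rightarrow> 'b \<Rightarrow> 'a"
    and T :: nat
    and x0 :: 'a
    and \<alpha> :: "nat \<Rightarrow> real"
    and tstar :: "'w \<Rightarrow> nat"
  assumes rho_pos: "\<rho> > 0"
    and X_ne: "X \<noteq> {}" and X_closed: "closed X" and X_convex: "convex X"
    and f_wc: "weakly_convex \<rho> f"
    \<comment> \<open>(A1) i.i.d. samples with law P on the probability space M\<close>
    and P_prob: "prob_space P"
    and M_prob: "prob_space M"
    and xi_meas: "\<And>i. \<xi> i \<in> measurable M P"
    and xi_distr: "\<And>i. distr M P (\<xi> i) = P"
    and xi_indep: "prob_space.indep_vars M (\<lambda>_. P) \<xi> UNIV"
    \<comment> \<open>(A2)\<close>
    and U_open: "open U" and X_sub_U: "X \<subseteq> U"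
    and G_meas: "(\<lambda>(x, \<omega>). G x \<omega>) \<in> borel_measurable (restrict_space borel U \<Otimes>\<^sub>M P)"
    and G_integrable: "\<And>x. x \<in> U \<Longrightarrow> integrable P (G x)"
    and G_subgrad: "\<And>x. x \<in> U \<Longrightarrow> (\<integral>\<omega>. G x \<omega> \<partial>P) \<in> subdiff f x"
    \<comment> \<open>(A3)\<close>
    and L_nonneg: "L \<ge> 0"
    and G_bound: "\<And>x. x \<in> X \<Longrightarrow> (\<integral>\<^sup>+\<omega>. ennreal ((norm (G x \<omega>))\<^sup>2) \<partial>P) \<le> ennreal (L\<^sup>2)"
    \<comment> \<open>algorithm data\<close>
    and x0_in: "x0 \<in> X"
    and alpha_nonneg: "\<And>t. t \<le> T \<Longrightarrow> \<alpha> t \<ge> 0"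
    and alpha_sum_pos: "(\<Sum>t\<le>T. \<alpha> t) > 0"
    \<comment> \<open>random index t*, independent of the samples\<close>
    and tstar_meas: "tstar \<in> measurable M (count_space UNIV)"
    and tstar_distr: "\<And>t. t \<le> T \<Longrightarrow>
        measure M {\<omega> \<in> space M. tstar \<omega> = t} = \<alpha> t / (\<Sum>i\<le>T. \<alpha> i)"
    and tstar_indep: "prob_space.indep_set M
        (sets (vimage_algebra (space M) tstar (count_space UNIV)))
        (sets (vimage_algebra (space M) (\<lambda>\<omega> i. \<xi> i \<omega>) (Pi\<^sub>M UNIV (\<lambda>_. P))))"
  shows
    "(\<forall>\<rho>b > \<rho>. \<forall>t \<le> T.
        (\<integral>\<omega>. real_of_ereal (moreau_env (phi_of f X) (1 / \<rho>b) (sgd_iter X G \<alpha> \<xi> x0 (Suc t) \<omega>)) \<partial>M)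
        \<le> (\<integral>\<omega>. real_of_ereal (moreau_env (phi_of f X) (1 / \<rho>b) (sgd_iter X G \<alpha> \<xi> x0 t \<omega>)) \<partial>M)
          - \<alpha> t * (\<rho>b - \<rho>) / \<rho>b *
            (\<integral>\<omega>. (norm (grad (\<lambda>z. real_of_ereal (moreau_env (phi_of f X) (1 / \<rho>b) z))
                      (sgd_iter X G \<alpha> \<xi> x0 t \<omega>)))\<^sup>2 \<partial>M)
          + (\<alpha> t)\<^sup>2 * \<rho>b * L\<^sup>2 / 2)
     \<and> (\<forall>\<rho>b > \<rho>.
        ereal (\<integral>\<omega>. (norm (grad (\<lambda>z. real_of_ereal (moreau_env (phi_of f X) (1 / \<rho>b) z))
                      (sgd_iter X G \<alpha> \<xi> x0 (tstar \<omega>) \<omega>)))\<^sup>2 \<partial>M)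
        \<le> ereal (\<rho>b / (\<rho>b - \<rho>)) *
           ((moreau_env (phi_of f X) (1 / \<rho>b) x0 - (INF y. phi_of f X y)
             + ereal (\<rho>b * L\<^sup>2 / 2 * (\<Sum>t\<le>T. (\<alpha> t)\<^sup>2)))
            / ereal (\<Sum>t\<le>T. \<alpha> t)))
     \<and> (\<forall>\<gamma> > 0. (\<forall>t \<le> T. \<alpha> t = \<gamma> / sqrt (real T + 1)) \<longrightarrow>
        ereal (\<integral>\<omega>. (norm (grad (\<lambda>z. real_of_ereal (moreau_env (phi_of f X) (1 / (2 * \<rho>)) z))
                      (sgd_iter X G \<alpha> \<xi> x0 (tstar \<omega>) \<omega>)))\<^sup>2 \<partial>M)
        \<le> ereal 2 *
           ((moreau_env (phi_of f X) (1 / (2 * \<rho>)) x0 - (INF y. phi_of f X y)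
             + ereal (\<rho> * L\<^sup>2 * \<gamma>\<^sup>2))
            / ereal (\<gamma> * sqrt (real T + 1))))"
proof -
  interpret s: sgdt \<rho> L X U f P M \<xi> G x0 \<alpha> T tstar
    by (intro sgdt.intro sgd.intro sgdt_axioms.intro; fact)
  have c1: "\<forall>\<rho>b > \<rho>. \<forall>t \<le> T.
        (\<integral>\<omega>. real_of_ereal (moreau_env (phi_of f X) (1 / \<rho>b) (sgd_iter X G \<alpha> \<xi> x0 (Suc t) \<omega>)) \<partial>M)
        \<le> (\<integral>\<omega>. real_of_ereal (moreau_env (phi_of f X) (1 / \<rho>b) (sgd_iter X G \<alpha> \<xi> x0 t \<omega>)) \<partial>M)
          - \<alpha> t * (\<rho>b - \<rho>) / \<rho>b *
            (\<integral>\<omega>. (norm (grad (\<lambda>z. real_of_ereal (moreau_env (phi_of f X) (1 / \<rho>b) z))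
                      (sgd_iter X G \<alpha> \<xi> x0 t \<omega>)))\<^sup>2 \<partial>M)
          + (\<alpha> t)\<^sup>2 * \<rho>b * L\<^sup>2 / 2"
  proof (intro allI impI)
    fix \<rho>b t assume rb: "\<rho>b > \<rho>" and t: "t \<le> T"
    interpret b: sgdtb \<rho> L X U f P M \<xi> G x0 \<alpha> T tstar \<rho>b
      by unfold_locales (rule rb)
    show "(\<integral>\<omega>. real_of_ereal (moreau_env (phi_of f X) (1 / \<rho>b) (sgd_iter X G \<alpha> \<xi> x0 (Suc t) \<omega>)) \<partial>M)
        \<le> (\<integral>\<omega>. real_of_ereal (moreau_env (phi_of f X) (1 / \<rho>b) (sgd_iter X G \<alpha> \<xi> x0 t \<omega>)) \<partial>M)
          - \<alpha> t * (\<rho>b - \<rho>) / \<rho>b *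
            (\<integral>\<omega>. (norm (grad (\<lambda>z. real_of_ereal (moreau_env (phi_of f X) (1 / \<rho>b) z))
                      (sgd_iter X G \<alpha> \<xi> x0 t \<omega>)))\<^sup>2 \<partial>M)
          + (\<alpha> t)\<^sup>2 * \<rho>b * L\<^sup>2 / 2"
      using b.step_E[OF alpha_nonneg[OF t]] unfolding b.m.moreau_eq b.m.\<mu>_def by (simp add: grad_eqI[OF b.m.env_deriv])
  qed
  have c2: "\<forall>\<rho>b > \<rho>.
        ereal (\<integral>\<omega>. (norm (grad (\<lambda>z. real_of_ereal (moreau_env (phi_of f X) (1 / \<rho>b) z))
                      (sgd_iter X G \<alpha> \<xi> x0 (tstar \<omega>) \<omega>)))\<^sup>2 \<partial>M)
        \<le> ereal (\<rho>b / (\<rho>b - \<rho>)) *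
           ((moreau_env (phi_of f X) (1 / \<rho>b) x0 - (INF y. phi_of f X y)
             + ereal (\<rho>b * L\<^sup>2 / 2 * (\<Sum>t\<le>T. (\<alpha> t)\<^sup>2)))
            / ereal (\<Sum>t\<le>T. \<alpha> t))"
  proof (intro allI impI)
    fix \<rho>b assume rb: "\<rho>b > \<rho>"
    interpret b: sgdtb \<rho> L X U f P M \<xi> G x0 \<alpha> T tstar \<rho>b
      by unfold_locales (rule rb)
    have S: "(\<Sum>t\<le>T. \<alpha> t) > 0" by (rule alpha_sum_pos)
    have mu: "\<rho>b - \<rho> > 0" using rb by simp
    have rbp: "\<rho>b > 0" using rb rho_pos by simp
    have lhs: "(\<integral>\<omega>. (norm (grad (\<lambda>z. real_of_ereal (moreau_env (phi_of f X) (1 / \<rho>b) z))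
                      (sgd_iter X G \<alpha> \<xi> x0 (tstar \<omega>) \<omega>)))\<^sup>2 \<partial>M) = (\<Sum>t\<le>T. \<alpha> t / b.S * b.D t)"
      unfolding b.m.grad_eq by (rule b.tstar_D)
    show "ereal (\<integral>\<omega>. (norm (grad (\<lambda>z. real_of_ereal (moreau_env (phi_of f X) (1 / \<rho>b) z))
                      (sgd_iter X G \<alpha> \<xi> x0 (tstar \<omega>) \<omega>)))\<^sup>2 \<partial>M)
        \<le> ereal (\<rho>b / (\<rho>b - \<rho>)) *
           ((moreau_env (phi_of f X) (1 / \<rho>b) x0 - (INF y. phi_of f X y)
             + ereal (\<rho>b * L\<^sup>2 / 2 * (\<Sum>t\<le>T. (\<alpha> t)\<^sup>2)))
            / ereal (\<Sum>t\<le>T. \<alpha> t))"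
    proof (cases "(INF y. phi_of f X y)")
      case (real c)
      have "(\<Sum>t\<le>T. \<alpha> t / b.S * b.D t) \<le> \<rho>b / b.m.\<mu> * ((b.m.env x0 - c + \<rho>b * L\<^sup>2 / 2 * (\<Sum>t\<le>T. (\<alpha> t)\<^sup>2)) / b.S)"
        by (rule b.claim2_real[OF real])
      hence l: "ereal (\<integral>\<omega>. (norm (grad (\<lambda>z. real_of_ereal (moreau_env (phi_of f X) (1 / \<rho>b) z))
                      (sgd_iter X G \<alpha> \<xi> x0 (tstar \<omega>) \<omega>)))\<^sup>2 \<partial>M)
          \<le> ereal (\<rho>b / (\<rho>b - \<rho>) * ((b.m.env x0 - c + \<rho>b * L\<^sup>2 / 2 * (\<Sum>t\<le>T. (\<alpha> t)\<^sup>2)) / (\<Sum>t\<le>T. \<alpha> t)))"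
        unfolding lhs b.m.\<mu>_def b.S_def by simp
      have r: "ereal (\<rho>b / (\<rho>b - \<rho>)) *
           ((moreau_env (phi_of f X) (1 / \<rho>b) x0 - (INF y. phi_of f X y)
             + ereal (\<rho>b * L\<^sup>2 / 2 * (\<Sum>t\<le>T. (\<alpha> t)\<^sup>2)))
            / ereal (\<Sum>t\<le>T. \<alpha> t))
          = ereal (\<rho>b / (\<rho>b - \<rho>) * ((b.m.env x0 - c + \<rho>b * L\<^sup>2 / 2 * (\<Sum>t\<le>T. (\<alpha> t)\<^sup>2)) / (\<Sum>t\<le>T. \<alpha> t)))"
        unfolding b.m.moreau_eq real using S by simp
      show ?thesis unfolding r by (rule l)
    next
      case PInf
      have "(INF y. phi_of f X y) \<le> phi_of f X x0" by (rule INF_lower) simp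
      thus ?thesis using PInf x0_in by (simp add: phi_of_def indic_fun_def)
    next
      case MInf
      have "ereal (b.m.env x0) - (INF y. phi_of f X y) + ereal (\<rho>b * L\<^sup>2 / 2 * (\<Sum>t\<le>T. (\<alpha> t)\<^sup>2)) = \<infinity>"
        using MInf by simp
      hence "(ereal (b.m.env x0) - (INF y. phi_of f X y) + ereal (\<rho>b * L\<^sup>2 / 2 * (\<Sum>t\<le>T. (\<alpha> t)\<^sup>2))) / ereal (\<Sum>t\<le>T. \<alpha> t) = \<infinity>"
        using S by simp
      moreover have "ereal (\<rho>b / (\<rho>b - \<rho>)) * \<infinity> = \<infinity>" using mu rbp by simp
      ultimately show ?thesis unfolding b.m.moreau_eq by simp
    qed
  qed
  have c3: "\<forall>\<gamma> > 0. (\<forall>t \<le> T. \<alpha> t = \<gamma> / sqrt (real T + 1)) \<longrightarrow>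
        ereal (\<integral>\<omega>. (norm (grad (\<lambda>z. real_of_ereal (moreau_env (phi_of f X) (1 / (2 * \<rho>)) z))
                      (sgd_iter X G \<alpha> \<xi> x0 (tstar \<omega>) \<omega>)))\<^sup>2 \<partial>M)
        \<le> ereal 2 *
           ((moreau_env (phi_of f X) (1 / (2 * \<rho>)) x0 - (INF y. phi_of f X y)
             + ereal (\<rho> * L\<^sup>2 * \<gamma>\<^sup>2))
            / ereal (\<gamma> * sqrt (real T + 1)))"
  proof (intro allI impI)
    fix \<gamma> :: real assume g: "\<gamma> > 0" and a: "\<forall>t \<le> T. \<alpha> t = \<gamma> / sqrt (real T + 1)"
    have r2: "2 * \<rho> > \<rho>" using rho_pos by simp
    have sq: "sqrt (real T + 1) > 0" by simp
    have e1: "2 * \<rho> / (2 * \<rho> - \<rho>) = 2" using rho_pos by simp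
    have e2: "2 * \<rho> * L\<^sup>2 / 2 * (\<Sum>t\<le>T. (\<alpha> t)\<^sup>2) = \<rho> * L\<^sup>2 * \<gamma>\<^sup>2"
    proof -
      have "(\<Sum>t\<le>T. (\<alpha> t)\<^sup>2) = (\<Sum>t\<le>T. \<gamma>\<^sup>2 / (real T + 1))"
        using a by (intro sum.cong) (auto simp: power_divide)
      also have "\<dots> = \<gamma>\<^sup>2" by (simp add: add.commute)
      finally show ?thesis by simp
    qed
    have e3: "(\<Sum>t\<le>T. \<alpha> t) = \<gamma> * sqrt (real T + 1)"
    proof -
      have "(\<Sum>t\<le>T. \<alpha> t) = (\<Sum>t\<le>T. \<gamma> / sqrt (real T + 1))" using a by (intro sum.cong) auto
      also have "\<dots> = (real T + 1) * \<gamma> / sqrt (real T + 1)" by simp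
      also have "\<dots> = \<gamma> * sqrt (real T + 1)"
      proof -
        have "sqrt (real T + 1) * sqrt (real T + 1) = real T + 1" by (simp add: real_sqrt_mult_self)
        thus ?thesis using sq by (simp add: field_simps)
      qed
      finally show ?thesis .
    qed
    from c2[rule_format, OF r2] show "ereal (\<integral>\<omega>. (norm (grad (\<lambda>z. real_of_ereal (moreau_env (phi_of f X) (1 / (2 * \<rho>)) z))
                      (sgd_iter X G \<alpha> \<xi> x0 (tstar \<omega>) \<omega>)))\<^sup>2 \<partial>M)
        \<le> ereal 2 *
           ((moreau_env (phi_of f X) (1 / (2 * \<rho>)) x0 - (INF y. phi_of f X y)
             + ereal (\<rho> * L\<^sup>2 * \<gamma>\<^sup>2))
            / ereal (\<gamma> * sqrt (real T + 1)))"
      unfolding e1 e2 e3 .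
  qed
  show ?thesis using c1 c2 c3 by blast
qed

end
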